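(* Let $0<\varepsilon\le1$, $\alpha\in(0,1)$, $\xi(x)=e^{-\alpha x^2/(2\sqrt\varepsilon)}$ and let $\rho$ be a polynomial. Then $$S_\varepsilon\,\rho(x^2)\xi=-\frac{i}{2\sqrt\varepsilon}\Big(\rho(\mathcal T)\log\frac{1+\alpha}{1-\alpha}\Big)\xi,\qquad S^*_\varepsilon\,\rho(x^2)x\xi=-\frac{i}{2\sqrt\varepsilon}\Big(\rho(\mathcal T)\log\frac{1+\alpha}{1-\alpha}\Big)x\xi,$$ where $\mathcal T=x^2-2\sqrt\varepsilon\,\frac{\partial}{\partial\alpha}$.
   Context: Work in $L^2(\mathbb{R})$. Let $q$ be multiplication by $x$, $p=-i\,d/dx$, $t=q^{-1}p$ with $D(t)=\{f\in D(p):pf\in D(q^{-1})\}$, $t^*$ its adjoint; $L^2_0$, $L^2_1$ the even/odd subspaces. Define $S_\varepsilon$ in $L^2_0$ by $D(S_\varepsilon)=\{f\in L^2_0\cap\bigcap_nD(t^{2n+1}):\sum_{n=0}^N\frac{(-1)^n}{2n+1}(\sqrt\varepsilon t)^{2n+1}f$ converges in norm$\}$, $S_\varepsilon f=-\varepsilon^{-1/2}\sum_{n\ge0}\frac{(-1)^n}{2n+1}(\sqrt\varepsilon t)^{2n+1}f$, and $S^*_\varepsilon$ (notation only) in $L^2_1$ by the same formulas with $t^*$ and $L^2_1$. The operator $\mathcal T=x^2-2\sqrt\varepsilon\,\partial_\alpha$ acts on functions of $\alpha$ with $x$ as a parameter; $\rho(\mathcal T)$ is obtained by substituting $\mathcal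 T$ into the polynomial $\rho$, so that $\rho(\mathcal T)\log\frac{1+\alpha}{1-\alpha}$ is a function of $(x,\alpha)$. (The identities include that $\rho(x^2)\xi\in D(S_\varepsilon)$ and $\rho(x^2)x\xi\in D(S^*_\varepsilon)$.) *)

theory Defs
  imports "HOL-Analysis.Analysis" "HOL-Computational_Algebra.Polynomial"
begin

text \<open>Elements of L2(R) are represented by functions real => complex; equality is a.e. equality.\<close>

definition L2 :: "(real \<Rightarrow> complex) \<Rightarrow> bool" where
  "L2 f \<longleftrightarrow> f \<in> borel_measurable lborel \<and> integrable lborel (\<lambda>x. (cmod (f x))^2)"

definition l2norm :: "(real \<Rightarrow> complex) \<Rightarrow> real" where
  "l2norm f = sqrt (integral\<^sup>L lborel (\<lambda>x. (cmod (f x))^2))"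

definition l2inner :: "(real \<Rightarrow> complex) \<Rightarrow> (real \<Rightarrow> complex) \<Rightarrow> complex" where
  "l2inner u v = integral\<^sup>L lborel (\<lambda>x. cnj (u x) * v x)"

definition ae_eq :: "(real \<Rightarrow> complex) \<Rightarrow> (real \<Rightarrow> complex) \<Rightarrow> bool" where
  "ae_eq f g \<longleftrightarrow> (AE x in lborel. f x = g x)"

definition even_fun :: "(real \<Rightarrow> complex) \<Rightarrow> bool" where
  "even_fun f \<longleftrightarrow> L2 f \<and> (AE x in lborel. f (-x) = f x)"

definition odd_fun :: "(real \<Rightarrow> complex) \<Rightarrow> bool" where
  "odd_fun f \<longleftrightarrow> L2 f \<and> (AE x in lborel. f (-x) = - f x)"

text \<open>Graph of p = -i d/dx on its maximal domain H1(R): f is a.e. equal to a locally absolutely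
  continuous F with F' = i h in L2, and p f = h.\<close>
definition p_graph :: "(real \<Rightarrow> complex) \<Rightarrow> (real \<Rightarrow> complex) \<Rightarrow> bool" where
  "p_graph f h \<longleftrightarrow> L2 f \<and> L2 h \<and>
     (\<exists>F. ae_eq F f \<and> (\<forall>a b. F b - F a = (LBINT x=a..b. \<i> * h x)))"

text \<open>Graph of t = q^{-1} p, with D(t) = {f in D(p). p f in D(q^{-1})}.\<close>
definition t_graph :: "(real \<Rightarrow> complex) \<Rightarrow> (real \<Rightarrow> complex) \<Rightarrow> bool" where
  "t_graph f k \<longleftrightarrow> L2 k \<and>
     (\<exists>h. p_graph f h \<and> L2 (\<lambda>x. h x / of_real x) \<and> ae_eq k (\<lambda>x. h x / of_real x))"

definition t_adj_graph :: "(real \<Rightarrow> complex) \<Rightarrow> (real \<Rightarrow> complex) \<Rightarrow> bool" where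
  "t_adj_graph g k \<longleftrightarrow> L2 g \<and> L2 k \<and> (\<forall>f h. t_graph f h \<longrightarrow> l2inner h g = l2inner f k)"

fun pow_graph :: "((real \<Rightarrow> complex) \<Rightarrow> (real \<Rightarrow> complex) \<Rightarrow> bool) \<Rightarrow> nat
    \<Rightarrow> (real \<Rightarrow> complex) \<Rightarrow> (real \<Rightarrow> complex) \<Rightarrow> bool" where
  "pow_graph R 0 f g = (L2 f \<and> L2 g \<and> ae_eq g f)"
| "pow_graph R (Suc n) f g = (\<exists>h. R f h \<and> pow_graph R n h g)"

definition arctan_graph :: "((real \<Rightarrow> complex) \<Rightarrow> (real \<Rightarrow> complex) \<Rightarrow> bool) \<Rightarrow> real
    \<Rightarrow> (real \<Rightarrow> complex) \<Rightarrow> (real \<Rightarrow> complex) \<Rightarrow> bool" where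
  "arctan_graph R \<epsilon> f g \<longleftrightarrow> L2 f \<and> L2 g \<and>
     (\<exists>T. (\<forall>n. pow_graph R (2*n+1) f (T n)) \<and>
        (\<lambda>N. l2norm (\<lambda>x. (\<Sum>n\<le>N. of_real ((-1)^n / real (2*n+1) * sqrt \<epsilon> ^ (2*n+1)) * T n x)
                         + of_real (sqrt \<epsilon>) * g x)) \<longlonglongrightarrow> 0)"

definition S_graph :: "real \<Rightarrow> (real \<Rightarrow> complex) \<Rightarrow> (real \<Rightarrow> complex) \<Rightarrow> bool" where
  "S_graph \<epsilon> f g \<longleftrightarrow> even_fun f \<and> arctan_graph t_graph \<epsilon> f g"

definition S_adj_graph :: "real \<Rightarrow> (real \<Rightarrow> complex) \<Rightarrow> (real \<Rightarrow> complex) \<Rightarrow> bool" where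
  "S_adj_graph \<epsilon> f g \<longleftrightarrow> odd_fun f \<and> arctan_graph t_adj_graph \<epsilon> f g"

definition Tcal :: "real \<Rightarrow> (real \<Rightarrow> real \<Rightarrow> complex) \<Rightarrow> (real \<Rightarrow> real \<Rightarrow> complex)" where
  "Tcal \<epsilon> u = (\<lambda>x a. of_real (x^2) * u x a
                  - of_real (2 * sqrt \<epsilon>) * vector_derivative (\<lambda>b. u x b) (at a))"

definition logfun :: "real \<Rightarrow> real \<Rightarrow> complex" where
  "logfun x a = of_real (ln ((1 + a) / (1 - a)))"

definition rho_T :: "real \<Rightarrow> complex poly \<Rightarrow> real \<Rightarrow> real \<Rightarrow> complex" where
  "rho_T \<epsilon> \<rho> x a = (\<Sum>k\<le>degree \<rho>. coeff \<rho> k * ((Tcal \<epsilon> ^^ k) logfun) x a)"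

end

theory Submission
  imports Defs "HOL-Probability.Distributions" "HOL-Real_Asymp.Real_Asymp"
begin


lemma integrable_gauss:
  fixes a :: real assumes a: "a > 0"
  shows "integrable lborel (\<lambda>x. exp (- a * x\<^sup>2))"
proof -
  define \<sigma> where "\<sigma> = sqrt (1 / (2*a))"
  have s: "\<sigma> > 0" using a by (simp add: \<sigma>_def)
  have s2: "\<sigma>\<^sup>2 = 1 / (2*a)" using a by (simp add: \<sigma>_def)
  have "integrable lborel (\<lambda>x. sqrt (2*pi*\<sigma>\<^sup>2) * normal_density 0 \<sigma> x)"
    using integrable_normal_density[OF s] by simp
  moreover have "\<And>x. sqrt (2*pi*\<sigma>\<^sup>2) * normal_density 0 \<sigma> x = exp (- a * x\<^sup>2)"
    using s a by (simp add: normal_density_def s2 field_simps)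
  ultimately show ?thesis by simp
qed

lemma pow_le_exp:
  fixes \<delta> x :: real assumes d: "\<delta> > 0"
  shows "\<bar>x\<bar> ^ i \<le> (1 + (real i / \<delta>) ^ i) * exp (\<delta> * x\<^sup>2)"
proof -
  have e1: "1 \<le> exp (\<delta> * x\<^sup>2)" using d by simp
  have A: "(x\<^sup>2) ^ i \<le> (real i / \<delta>) ^ i * exp (\<delta> * x\<^sup>2)"
  proof (cases "i = 0")
    case True then show ?thesis using e1 by simp
  next
    case False
    have "(\<delta> * x\<^sup>2 / real i) ^ i \<le> (1 + \<delta> * x\<^sup>2 / real i) ^ i"
      by (rule power_mono) (use d in auto)
    also have "\<dots> \<le> exp (\<delta> * x\<^sup>2)"
      using d False by (intro exp_ge_one_plus_x_over_n_power_n) (auto intro: order.trans[of _ 0])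
    finally have "(\<delta> / real i) ^ i * (x\<^sup>2) ^ i \<le> exp (\<delta> * x\<^sup>2)"
      by (simp add: power_mult_distrib field_simps)
    then have "(real i / \<delta>) ^ i * ((\<delta> / real i) ^ i * (x\<^sup>2) ^ i) \<le> (real i / \<delta>) ^ i * exp (\<delta> * x\<^sup>2)"
      by (rule mult_left_mono) (use d in auto)
    moreover have "(real i / \<delta>) ^ i * (\<delta> / real i) ^ i = 1"
      using d False by (simp add: power_mult_distrib[symmetric])
    ultimately show ?thesis by (simp add: mult.assoc[symmetric])
  qed
  have B: "\<bar>x\<bar> ^ i \<le> 1 + (x\<^sup>2) ^ i"
  proof (cases "\<bar>x\<bar> \<le> 1")
    case True then have "\<bar>x\<bar> ^ i \<le> 1" by (simp add: power_le_one)
    moreover have "0 \<le> (x\<^sup>2) ^ i" by simp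
    ultimately show ?thesis by linarith
  next
    case False
    have h: "\<bar>x\<bar> \<le> \<bar>x\<bar>^2"
    proof -
      have "\<bar>x\<bar>*1 \<le> \<bar>x\<bar>*\<bar>x\<bar>" using False by (intro mult_left_mono) auto
      then show ?thesis by (simp add: power2_eq_square)
    qed
    then have "\<bar>x\<bar> ^ i \<le> (\<bar>x\<bar>^2) ^ i" 
      by (intro power_mono) auto
    then show ?thesis by (simp add: power2_abs)
  qed
  have "(1 + (real i / \<delta>) ^ i) * exp (\<delta> * x\<^sup>2) = exp (\<delta> * x\<^sup>2) + (real i / \<delta>) ^ i * exp (\<delta> * x\<^sup>2)"
    by (simp add: algebra_simps)
  then show ?thesis using A B e1 by linarith
qed

lemma poly_exp_bound:
  fixes Q :: "complex poly" and \<delta> :: real assumes d: "\<delta> > 0"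
  shows "\<exists>K. \<forall>x::real. cmod (poly Q (of_real x)) \<le> K * exp (\<delta> * x\<^sup>2)"
proof -
  define K where "K = (\<Sum>i\<le>degree Q. cmod (coeff Q i) * (1 + (real i / \<delta>) ^ i))"
  have "cmod (poly Q (of_real x)) \<le> K * exp (\<delta> * x\<^sup>2)" for x
  proof -
    have "cmod (poly Q (of_real x)) \<le> (\<Sum>i\<le>degree Q. cmod (coeff Q i * of_real x ^ i))"
      unfolding poly_altdef by (rule norm_sum)
    also have "\<dots> \<le> (\<Sum>i\<le>degree Q. cmod (coeff Q i) * ((1 + (real i / \<delta>) ^ i) * exp (\<delta> * x\<^sup>2)))"
      by (intro sum_mono) (auto simp: norm_mult norm_power intro!: mult_left_mono pow_le_exp d)
    also have "\<dots> = K * exp (\<delta> * x\<^sup>2)" by (simp add: K_def sum_distrib_right mult.assoc)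
    finally show ?thesis .
  qed
  then show ?thesis by blast
qed

definition gdom :: "(real \<Rightarrow> complex) \<Rightarrow> bool" where
  "gdom u \<longleftrightarrow> continuous_on UNIV u \<and> (\<exists>K a. 0 < a \<and> (\<forall>x. cmod (u x) \<le> K * exp (- a * x\<^sup>2)))"

lemma gdom_polyexp:
  fixes Q :: "complex poly" assumes c: "c > 0"
  shows "gdom (\<lambda>x. poly Q (of_real x) * of_real (exp (- c * x\<^sup>2)))"
proof -
  obtain K where K: "\<And>x::real. cmod (poly Q (of_real x)) \<le> K * exp (c/2 * x\<^sup>2)"
    using poly_exp_bound[of "c/2" Q] c by auto
  have "cmod (poly Q (of_real x) * of_real (exp (- c * x\<^sup>2))) \<le> K * exp (- (c/2) * x\<^sup>2)" for x
  proof -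
    have "cmod (poly Q (of_real x) * of_real (exp (- c * x\<^sup>2))) = cmod (poly Q (of_real x)) * exp (- c * x\<^sup>2)"
      by (simp add: norm_mult)
    also have "\<dots> \<le> K * exp (c/2 * x\<^sup>2) * exp (- c * x\<^sup>2)"
      by (intro mult_right_mono K) simp
    also have "\<dots> = K * exp (- (c/2) * x\<^sup>2)" by (simp add: mult.assoc exp_add[symmetric])
    finally show ?thesis .
  qed
  moreover have "continuous_on UNIV (\<lambda>x. poly Q (of_real x) * of_real (exp (- c * x\<^sup>2)))"
    by (intro continuous_intros)
  ultimately show ?thesis unfolding gdom_def using c by (intro conjI exI[of _ K] exI[of _ "c/2"]) auto
qed

lemma gdom_add: assumes "gdom u" "gdom v" shows "gdom (\<lambda>x. u x + v x)"
proof -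
  obtain K1 a1 K2 a2 where 1: "a1 > 0" "\<And>x. cmod (u x) \<le> K1 * exp (- a1 * x\<^sup>2)"
    and 2: "a2 > 0" "\<And>x. cmod (v x) \<le> K2 * exp (- a2 * x\<^sup>2)"
    using assms unfolding gdom_def by metis
  define a where "a = min a1 a2"
  have "cmod (u x + v x) \<le> (\<bar>K1\<bar> + \<bar>K2\<bar>) * exp (- a * x\<^sup>2)" for x
  proof -
    have e1: "exp (- a1 * x\<^sup>2) \<le> exp (- a * x\<^sup>2)" "exp (- a2 * x\<^sup>2) \<le> exp (- a * x\<^sup>2)"
      by (auto simp: a_def intro!: mult_right_mono)
    have "K1 * exp (- a1 * x\<^sup>2) \<le> \<bar>K1\<bar> * exp (- a * x\<^sup>2)"
      by (meson abs_ge_self e1(1) exp_ge_zero mult_mono order.trans abs_ge_zero)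
    moreover have "K2 * exp (- a2 * x\<^sup>2) \<le> \<bar>K2\<bar> * exp (- a * x\<^sup>2)"
      by (meson abs_ge_self e1(2) exp_ge_zero mult_mono order.trans abs_ge_zero)
    ultimately show ?thesis using norm_triangle_ineq[of "u x" "v x"] 1(2)[of x] 2(2)[of x]
      by (simp add: algebra_simps)
  qed
  moreover have "a > 0" using 1 2 by (simp add: a_def)
  moreover have "continuous_on UNIV (\<lambda>x. u x + v x)"
    using assms unfolding gdom_def by (intro continuous_intros) auto
  ultimately show ?thesis unfolding gdom_def by blast
qed

lemma gdom_cmult: assumes "gdom u" shows "gdom (\<lambda>x. k * u x)"
proof -
  obtain K a where 1: "a > 0" "\<And>x. cmod (u x) \<le> K * exp (- a * x\<^sup>2)"
    using assms unfolding gdom_def by metis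
  have "cmod (k * u x) \<le> (cmod k * K) * exp (- a * x\<^sup>2)" for x
    using 1(2)[of x] by (simp add: norm_mult mult.assoc mult_left_mono)
  moreover have "continuous_on UNIV (\<lambda>x. k * u x)"
    using assms unfolding gdom_def by (intro continuous_intros) auto
  ultimately show ?thesis unfolding gdom_def using 1 by blast
qed

lemma gdom_zero: "gdom (\<lambda>x. 0)"
  unfolding gdom_def by (auto intro!: exI[of _ 1])

lemma gdom_sum: assumes "\<And>j. j \<in> J \<Longrightarrow> gdom (u j)" shows "gdom (\<lambda>x. \<Sum>j\<in>J. u j x)"
  using assms
proof (induction J rule: infinite_finite_induct)
  case (infinite A) then show ?case by (simp add: gdom_zero)
next
  case empty then show ?case by (simp add: gdom_zero)
next
  case (insert a A) then show ?case by (simp add: gdom_add)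
qed

lemma gdom_measurable: "gdom u \<Longrightarrow> u \<in> borel_measurable lborel"
  unfolding gdom_def by (auto intro: borel_measurable_continuous_onI)

lemma gdom_integrable: assumes "gdom u" shows "integrable lborel u"
proof -
  obtain K a where 1: "a > 0" "\<And>x. cmod (u x) \<le> K * exp (- a * x\<^sup>2)"
    using assms unfolding gdom_def by metis
  show ?thesis
  proof (rule Bochner_Integration.integrable_bound[OF _ gdom_measurable[OF assms]])
    show "integrable lborel (\<lambda>x. K * exp (- a * x\<^sup>2))"
      using integrable_gauss[OF 1(1)] by simp
    show "AE x in lborel. norm (u x) \<le> norm (K * exp (- a * x\<^sup>2))"
      using 1(2) by (auto intro: order.trans[OF _ abs_ge_self])
  qed
qed

lemma gdom_L2: assumes "gdom u" shows "L2 u"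
proof -
  obtain K a where 1: "a > 0" "\<And>x. cmod (u x) \<le> K * exp (- a * x\<^sup>2)"
    using assms unfolding gdom_def by metis
  have "integrable lborel (\<lambda>x. (cmod (u x))\<^sup>2)"
  proof (rule Bochner_Integration.integrable_bound)
    show "integrable lborel (\<lambda>x. K\<^sup>2 * exp (- (2*a) * x\<^sup>2))"
      using integrable_gauss[of "2*a"] 1(1) by simp
    show "(\<lambda>x. (cmod (u x))\<^sup>2) \<in> borel_measurable lborel"
      using gdom_measurable[OF assms] by measurable
    show "AE x in lborel. norm ((cmod (u x))\<^sup>2) \<le> norm (K\<^sup>2 * exp (- (2*a) * x\<^sup>2))"
    proof (intro AE_I2)
      fix x
      have "(cmod (u x))\<^sup>2 \<le> (K * exp (- a * x\<^sup>2))\<^sup>2"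
        using 1(2)[of x] by (intro power_mono) auto
      also have "\<dots> = K\<^sup>2 * exp (- (2*a) * x\<^sup>2)"
        by (simp add: power_mult_distrib exp_double[symmetric] power2_eq_square exp_add[symmetric] algebra_simps)
      finally show "norm ((cmod (u x))\<^sup>2) \<le> norm (K\<^sup>2 * exp (- (2*a) * x\<^sup>2))" by simp
    qed
  qed
  then show ?thesis unfolding L2_def using gdom_measurable[OF assms] by simp
qed

lemma L2_meas: "L2 u \<Longrightarrow> u \<in> borel_measurable borel"
  unfolding L2_def by simp

lemma L2_prod_norm_integrable:
  assumes "L2 u" "L2 v"
  shows "integrable lborel (\<lambda>x. cmod (u x) * cmod (v x))"
proof (rule Bochner_Integration.integrable_bound)
  show "integrable lborel (\<lambda>x. ((cmod (u x))\<^sup>2 + (cmod (v x))\<^sup>2) / 2)"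
    using assms unfolding L2_def by auto
  note [measurable] = L2_meas[OF assms(1)] L2_meas[OF assms(2)]
  show "(\<lambda>x. cmod (u x) * cmod (v x)) \<in> borel_measurable lborel"
    by measurable
  show "AE x in lborel. norm (cmod (u x) * cmod (v x)) \<le> norm (((cmod (u x))\<^sup>2 + (cmod (v x))\<^sup>2) / 2)"
  proof (intro AE_I2)
    fix x
    have "0 \<le> (cmod (u x) - cmod (v x))\<^sup>2" by simp
    then show "norm (cmod (u x) * cmod (v x)) \<le> norm (((cmod (u x))\<^sup>2 + (cmod (v x))\<^sup>2) / 2)"
      by (simp add: power2_eq_square algebra_simps)
  qed
qed

lemma L2_prod_integrable:
  assumes "L2 u" "L2 v"
  shows "integrable lborel (\<lambda>x. u x * v x)"
proof (rule Bochner_Integration.integrable_bound[OF L2_prod_norm_integrable[OF assms]])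
  note [measurable] = L2_meas[OF assms(1)] L2_meas[OF assms(2)]
  show "(\<lambda>x. u x * v x) \<in> borel_measurable lborel"
    by measurable
qed (auto simp: norm_mult)

lemma borel_measurable_cnj[measurable]:
  assumes [measurable]: "f \<in> borel_measurable M" shows "(\<lambda>x. cnj (f x :: complex)) \<in> borel_measurable M"
proof -
  have "cnj \<in> borel_measurable borel"
    by (intro borel_measurable_continuous_onI continuous_on_cnj continuous_on_id)
  from measurable_compose[OF assms this] show ?thesis by (simp add: o_def)
qed

lemma L2_cnj: assumes "L2 u" shows "L2 (\<lambda>x. cnj (u x))"
proof -
  note [measurable] = L2_meas[OF assms(1)]
  have "(\<lambda>x. cnj (u x)) \<in> borel_measurable borel" by measurable
  then show ?thesis using assms unfolding L2_def by auto
qed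

lemma L2_cmult: "L2 u \<Longrightarrow> L2 (\<lambda>x. k * u x)"
  unfolding L2_def by (auto simp: norm_mult power_mult_distrib)

lemma L2_ae: assumes "L2 u" "v \<in> borel_measurable lborel" "AE x in lborel. u x = v x"
  shows "L2 v"
proof -
  have "integrable lborel (\<lambda>x. (cmod (v x))\<^sup>2)"
    using assms(1) unfolding L2_def
    by (rule conjE, subst integrable_cong_AE[where g="\<lambda>x. (cmod (u x))\<^sup>2"]) 
       (use assms in \<open>auto elim!: AE_mp\<close>)
  then show ?thesis using assms unfolding L2_def by auto
qed



definition Ef :: "real \<Rightarrow> complex poly \<Rightarrow> real \<Rightarrow> complex" where
  "Ef c P x = poly P (of_real (x^2)) * of_real (exp (- c * x^2))"
definition Of :: "real \<Rightarrow> complex poly \<Rightarrow> real \<Rightarrow> complex" where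
  "Of c P x = poly P (of_real (x^2)) * of_real x * of_real (exp (- c * x^2))"
definition dP :: "real \<Rightarrow> complex poly \<Rightarrow> complex poly" where
  "dP c P = smult 2 (pderiv P) - smult (of_real (2*c)) P"
definition Aop :: "real \<Rightarrow> complex poly \<Rightarrow> complex poly" where
  "Aop c P = smult (- \<i>) (dP c P)"

lemma Ef_poly: "Ef c P x = poly (pcompose P [:0,0,1:]) (of_real x) * of_real (exp (- c * x^2))"
  by (simp add: Ef_def poly_pcompose power2_eq_square)

lemma Of_poly: "Of c P x = poly (pcompose P [:0,0,1:] * [:0,1:]) (of_real x) * of_real (exp (- c * x^2))"
  by (simp add: Of_def poly_pcompose power2_eq_square mult.commute)

lemma gdom_Ef: "c > 0 \<Longrightarrow> gdom (Ef c P)"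
  using gdom_polyexp[of c "pcompose P [:0,0,1:]"] by (simp add: Ef_poly[abs_def])

lemma gdom_Of: "c > 0 \<Longrightarrow> gdom (Of c P)"
  using gdom_polyexp[of c "pcompose P [:0,0,1:] * [:0,1:]"] by (simp add: Of_poly[abs_def])

lemma Of_smult: "Of c (smult k P) x = k * Of c P x"
  by (simp add: Of_def)
lemma Ef_smult: "Ef c (smult k P) x = k * Ef c P x"
  by (simp add: Ef_def)

lemma Ef_deriv: "(Ef c P has_vector_derivative Of c (dP c P) x) (at x)"
proof -
  have d0: "((\<lambda>x::real. x^2) has_field_derivative 2*x) (at x)"
    by (auto intro!: derivative_eq_intros)
  have d1: "((\<lambda>x. complex_of_real (x^2)) has_vector_derivative of_real (2*x)) (at x)"
    by (rule has_vector_derivative_of_real[OF d0])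
  have d2: "(poly P has_field_derivative poly (pderiv P) (of_real (x^2))) (at (of_real (x^2)))"
    by (rule poly_DERIV)
  have d3: "((\<lambda>x. poly P (of_real (x^2))) has_vector_derivative (of_real (2*x) * poly (pderiv P) (of_real (x^2)))) (at x)"
    using field_vector_diff_chain_at[OF d1 d2] by (simp add: o_def)
  have d4: "((\<lambda>x. complex_of_real (exp (- c * x^2))) has_vector_derivative of_real (exp (- c * x^2) * (- c * (2 * x)))) (at x)"
    by (auto intro!: derivative_eq_intros)
  have "(Ef c P has_vector_derivative
     (poly P (of_real (x^2)) * of_real (exp (- c * x^2) * (- c * (2 * x))) + (of_real (2*x) * poly (pderiv P) (of_real (x^2))) * of_real (exp (- c * x^2)))) (at x)"
    unfolding Ef_def[abs_def] by (rule has_vector_derivative_mult[OF d3 d4])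
  moreover have "poly P (of_real (x^2)) * of_real (exp (- c * x^2) * (- c * (2 * x))) + (of_real (2*x) * poly (pderiv P) (of_real (x^2))) * of_real (exp (- c * x^2))
     = Of c (dP c P) x"
    by (simp add: Of_def dP_def algebra_simps)
  ultimately show ?thesis by simp
qed

lemma Ef_FTC: "(LBINT x=a..b. Of c (dP c P) x) = Ef c P b - Ef c P a" if "c > 0"
proof (rule interval_integral_FTC_finite)
  show "continuous_on {min a b..max a b} (Of c (dP c P))"
    using gdom_Of[OF that] unfolding gdom_def by (auto intro: continuous_on_subset)
  show "(Ef c P has_vector_derivative Of c (dP c P) x) (at x within {min a b..max a b})" for x
    by (rule has_vector_derivative_at_within[OF Ef_deriv])
qed

lemma even_Ef: "c > 0 \<Longrightarrow> even_fun (Ef c P)"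
  unfolding even_fun_def using gdom_L2[OF gdom_Ef] by (simp add: Ef_def)

lemma odd_Of: "c > 0 \<Longrightarrow> odd_fun (Of c P)"
  unfolding odd_fun_def using gdom_L2[OF gdom_Of] by (simp add: Of_def)

lemma Of_div: "x \<noteq> 0 \<Longrightarrow> Of c P x / of_real x = Ef c P x"
  by (simp add: Of_def Ef_def)

lemma t_graph_Ef: assumes c: "c > 0" shows "t_graph (Ef c P) (Ef c (Aop c P))"
  unfolding t_graph_def
proof (intro conjI exI)
  let ?h = "Of c (Aop c P)"
  show L: "L2 (Ef c (Aop c P))" by (rule gdom_L2[OF gdom_Ef[OF c]])
  have ae: "AE x in lborel. Ef c (Aop c P) x = ?h x / of_real x"
    using AE_lborel_singleton[of 0] by (auto elim!: AE_mp simp: Of_div)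
  then show "ae_eq (Ef c (Aop c P)) (\<lambda>x. ?h x / of_real x)" by (simp add: ae_eq_def)
  note [measurable] = gdom_measurable[OF gdom_Of[OF c], of "Aop c P"]
  have "(\<lambda>x. ?h x / of_real x) \<in> borel_measurable lborel" by measurable
  then show "L2 (\<lambda>x. ?h x / of_real x)" by (rule L2_ae[OF L _ ae])
  show "p_graph (Ef c P) ?h"
    unfolding p_graph_def
  proof (intro conjI exI allI)
    show "L2 (Ef c P)" by (rule gdom_L2[OF gdom_Ef[OF c]])
    show "L2 ?h" by (rule gdom_L2[OF gdom_Of[OF c]])
    show "ae_eq (Ef c P) (Ef c P)" by (simp add: ae_eq_def)
    fix a b
    have "\<And>x. \<i> * ?h x = Of c (dP c P) x" by (simp add: Aop_def Of_def algebra_simps)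
    then show "Ef c P b - Ef c P a = (LBINT x=a..b. \<i> * ?h x)"
      using Ef_FTC[OF c] by simp
  qed
qed

lemma pow_t_Ef: assumes c: "c > 0"
  shows "pow_graph t_graph n (Ef c P) (Ef c ((Aop c ^^ n) P))"
proof (induction n arbitrary: P)
  case 0
  then show ?case using gdom_L2[OF gdom_Ef[OF c]] by (simp add: ae_eq_def)
next
  case (Suc n)
  show ?case
    using t_graph_Ef[OF c, of P] Suc[of "Aop c P"] by (auto simp: funpow_Suc_right simp del: funpow.simps)
qed

lemma tendsto_gdom_top: assumes "gdom \<psi>" shows "(\<psi> \<longlongrightarrow> 0) at_top"
proof -
  obtain K a where 1: "a > 0" "\<And>x. cmod (\<psi> x) \<le> K * exp (- a * x\<^sup>2)"
    using assms unfolding gdom_def by metis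
  have "((\<lambda>R. K * exp (- a * R\<^sup>2)) \<longlongrightarrow> 0) at_top" using 1(1) by real_asymp
  then show ?thesis by (rule Lim_null_comparison[rotated]) (use 1 in auto)
qed

lemma tendsto_gdom_bot: assumes "gdom \<psi>" shows "(\<psi> \<longlongrightarrow> 0) at_bot"
proof -
  obtain K a where 1: "a > 0" "\<And>x. cmod (\<psi> x) \<le> K * exp (- a * x\<^sup>2)"
    using assms unfolding gdom_def by metis
  have "((\<lambda>R. K * exp (- a * R\<^sup>2)) \<longlongrightarrow> 0) at_bot" using 1(1) by real_asymp
  then show ?thesis by (rule Lim_null_comparison[rotated]) (use 1 in auto)
qed



lemma gdom_meas_borel: "gdom u \<Longrightarrow> u \<in> borel_measurable borel"
  using gdom_measurable by simp

definition Kf :: "real \<Rightarrow> real \<Rightarrow> real" where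
  "Kf s x = (if 0 \<le> x then (if 0 < s \<and> s < x then 1 else 0) else (if x < s \<and> s < 0 then -1 else 0))"

lemma G_kernel:
  fixes G u :: "real \<Rightarrow> complex"
  assumes G: "\<And>a b. G b - G a = (LBINT x=a..b. u x)"
  shows "G x - G 0 = (\<integral>s. Kf s x *\<^sub>R u s \<partial>lborel)"
proof -
  have "G x - G 0 = (LBINT s=ereal 0..ereal x. u s)" using G[of x 0] by simp
  also have "\<dots> = (\<integral>s. Kf s x *\<^sub>R u s \<partial>lborel)"
  proof (cases "0 \<le> x")
    case True
    have "(LBINT s=ereal 0..ereal x. u s) = (\<integral>s. indicator {0<..<x} s *\<^sub>R u s \<partial>lborel)"
      using True by (simp add: interval_lebesgue_integral_def set_lebesgue_integral_def)
    also have "\<dots> = (\<integral>s. Kf s x *\<^sub>R u s \<partial>lborel)"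
      using True by (intro Bochner_Integration.integral_cong[OF refl]) (auto simp: Kf_def split: split_indicator)
    finally show ?thesis .
  next
    case False
    have "(LBINT s=ereal 0..ereal x. u s) = - (\<integral>s. indicator {x<..<0} s *\<^sub>R u s \<partial>lborel)"
      using False by (simp add: interval_lebesgue_integral_def set_lebesgue_integral_def)
    also have "\<dots> = (\<integral>s. - (indicator {x<..<0} s *\<^sub>R u s) \<partial>lborel)"
      by (rule integral_minus[symmetric])
    also have "\<dots> = (\<integral>s. Kf s x *\<^sub>R u s \<partial>lborel)"
      using False by (intro Bochner_Integration.integral_cong[OF refl]) (auto simp: Kf_def split: split_indicator)
    finally show ?thesis .
  qed
  finally show ?thesis .
qed

lemma int_right:
  fixes \<psi> \<psi>' :: "real \<Rightarrow> complex"
  assumes d\<psi>: "\<And>x. (\<psi> has_vector_derivative \<psi>' x) (at x)" and g\<psi>: "gdom \<psi>" and g\<psi>': "gdom \<psi>'"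
  shows "(\<integral>x. indicator {s<..} x *\<^sub>R \<psi>' x \<partial>lborel) = - \<psi> s"
proof -
  note [measurable] = gdom_meas_borel[OF g\<psi>']
  have int: "integrable lborel \<psi>'" by (rule gdom_integrable[OF g\<psi>'])
  have si: "set_integrable lborel {s..} \<psi>'"
    unfolding set_integrable_def by (rule integrable_mult_indicator[OF _ int]) simp
  have lim1: "((\<lambda>b. set_lebesgue_integral lborel {s..b} \<psi>') \<longlongrightarrow> set_lebesgue_integral lborel {s..} \<psi>') at_top"
    by (rule tendsto_set_lebesgue_integral_at_top[OF _ si]) simp
  have cont: "continuous_on UNIV \<psi>'" using g\<psi>' unfolding gdom_def by simp
  have eq: "eventually (\<lambda>b. set_lebesgue_integral lborel {s..b} \<psi>' = \<psi> b - \<psi> s) at_top"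
  proof (rule eventually_at_top_linorderI[of s])
    fix b assume "s \<le> b"
    then have "set_lebesgue_integral lborel {s..b} \<psi>' = (LBINT x=s..b. \<psi>' x)"
      by (simp add: interval_integral_Icc)
    also have "\<dots> = \<psi> b - \<psi> s"
      by (rule interval_integral_FTC_finite)
         (auto intro: continuous_on_subset[OF cont] has_vector_derivative_at_within[OF d\<psi>])
    finally show "set_lebesgue_integral lborel {s..b} \<psi>' = \<psi> b - \<psi> s" .
  qed
  have lim2: "((\<lambda>b. \<psi> b - \<psi> s) \<longlongrightarrow> 0 - \<psi> s) at_top"
    by (intro tendsto_diff tendsto_gdom_top[OF g\<psi>] tendsto_const)
  have "set_lebesgue_integral lborel {s..} \<psi>' = - \<psi> s"
    using tendsto_unique[OF _ Lim_transform_eventually[OF lim1 eq] lim2] by simp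
  moreover have "(\<integral>x. indicator {s<..} x *\<^sub>R \<psi>' x \<partial>lborel) = set_lebesgue_integral lborel {s..} \<psi>'"
    unfolding set_lebesgue_integral_def
    by (rule integral_cong_AE) (use AE_lborel_singleton[of s] in \<open>auto elim!: AE_mp simp: indicator_def\<close>)
  ultimately show ?thesis by simp
qed

lemma int_left:
  fixes \<psi> \<psi>' :: "real \<Rightarrow> complex"
  assumes d\<psi>: "\<And>x. (\<psi> has_vector_derivative \<psi>' x) (at x)" and g\<psi>: "gdom \<psi>" and g\<psi>': "gdom \<psi>'"
  shows "(\<integral>x. indicator {..<s} x *\<^sub>R \<psi>' x \<partial>lborel) = \<psi> s"
proof -
  note [measurable] = gdom_meas_borel[OF g\<psi>']
  have int: "integrable lborel \<psi>'" by (rule gdom_integrable[OF g\<psi>'])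
  have si: "set_integrable lborel {..s} \<psi>'"
    unfolding set_integrable_def by (rule integrable_mult_indicator[OF _ int]) simp
  have lim1: "((\<lambda>a. set_lebesgue_integral lborel {a..s} \<psi>') \<longlongrightarrow> set_lebesgue_integral lborel {..s} \<psi>') at_bot"
    by (rule tendsto_set_lebesgue_integral_at_bot[OF _ si]) simp
  have cont: "continuous_on UNIV \<psi>'" using g\<psi>' unfolding gdom_def by simp
  have eq: "eventually (\<lambda>a. set_lebesgue_integral lborel {a..s} \<psi>' = \<psi> s - \<psi> a) at_bot"
  proof (rule eventually_at_bot_linorderI[of s])
    fix a assume "a \<le> s"
    then have "set_lebesgue_integral lborel {a..s} \<psi>' = (LBINT x=a..s. \<psi>' x)"
      by (simp add: interval_integral_Icc)
    also have "\<dots> = \<psi> s - \<psi> a"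
      by (rule interval_integral_FTC_finite)
         (auto intro: continuous_on_subset[OF cont] has_vector_derivative_at_within[OF d\<psi>])
    finally show "set_lebesgue_integral lborel {a..s} \<psi>' = \<psi> s - \<psi> a" .
  qed
  have lim2: "((\<lambda>a. \<psi> s - \<psi> a) \<longlongrightarrow> \<psi> s - 0) at_bot"
    by (intro tendsto_diff tendsto_gdom_bot[OF g\<psi>] tendsto_const)
  have "set_lebesgue_integral lborel {..s} \<psi>' = \<psi> s"
    using tendsto_unique[OF _ Lim_transform_eventually[OF lim1 eq] lim2] by simp
  moreover have "(\<integral>x. indicator {..<s} x *\<^sub>R \<psi>' x \<partial>lborel) = set_lebesgue_integral lborel {..s} \<psi>'"
    unfolding set_lebesgue_integral_def
    by (rule integral_cong_AE) (use AE_lborel_singleton[of s] in \<open>auto elim!: AE_mp simp: indicator_def\<close>)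
  ultimately show ?thesis by simp
qed



lemma Kf_meas[measurable]: "(\<lambda>p. Kf (fst p) (snd p)) \<in> borel_measurable (borel \<Otimes>\<^sub>M borel)"
  unfolding Kf_def by measurable

lemma Kf_bound:
  assumes "Kf s x \<noteq> 0" shows "s\<^sup>2 \<le> x\<^sup>2" "\<bar>Kf s x\<bar> = 1"
proof -
  show "\<bar>Kf s x\<bar> = 1" using assms by (auto simp: Kf_def split: if_splits)
  show "s\<^sup>2 \<le> x\<^sup>2"
  proof (cases "0 \<le> x")
    case True
    then have "0 < s" "s < x" using assms by (auto simp: Kf_def split: if_splits)
    then show ?thesis by (intro power_mono) auto
  next
    case False
    then have "x < s" "s < 0" using assms by (auto simp: Kf_def split: if_splits)
    then have "(-s)\<^sup>2 \<le> (-x)\<^sup>2" by (intro power_mono) auto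
    then show ?thesis by simp
  qed
qed

lemma ibp:
  fixes G u \<psi> \<psi>' :: "real \<Rightarrow> complex"
  assumes uL2: "L2 u" and G: "\<And>a b. G b - G a = (LBINT x=a..b. u x)"
    and d\<psi>: "\<And>x. (\<psi> has_vector_derivative \<psi>' x) (at x)" and g\<psi>: "gdom \<psi>" and g\<psi>': "gdom \<psi>'"
  shows "(\<integral>x. u x * \<psi> x \<partial>lborel) = - (\<integral>x. G x * \<psi>' x \<partial>lborel)"
proof -
  obtain K a where Ka: "a > 0" "\<And>x. cmod (\<psi>' x) \<le> K * exp (- a * x\<^sup>2)"
    using g\<psi>' unfolding gdom_def by metis
  have "cmod (\<psi>' 0) \<le> K" using Ka(2)[of 0] by simp
  then have K0: "K \<ge> 0" by (meson norm_ge_zero order.trans)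
  define b where "b = a/2"
  have b0: "b > 0" using Ka by (simp add: b_def)
  note [measurable] = L2_meas[OF uL2] gdom_meas_borel[OF g\<psi>'] gdom_meas_borel[OF g\<psi>]
  define Hc where "Hc = (\<lambda>s x. (Kf s x *\<^sub>R u s) * \<psi>' x)"
  have Hm: "case_prod Hc \<in> borel_measurable (lborel \<Otimes>\<^sub>M lborel)"
    unfolding Hc_def by measurable
  have Hm2[measurable]: "case_prod Hc \<in> borel_measurable (borel \<Otimes>\<^sub>M borel)"
    unfolding Hc_def by measurable
  have bnd: "norm (Hc s x) \<le> cmod (u s) * (K * exp (- b * s\<^sup>2)) * exp (- b * x\<^sup>2)" for s x
  proof (cases "Kf s x = 0")
    case True then show ?thesis using K0 by (simp add: Hc_def)
  next
    case False
    note kb = Kf_bound[OF False]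
    have "exp (- a * x\<^sup>2) = exp (- b * x\<^sup>2) * exp (- b * x\<^sup>2)"
      by (simp add: b_def exp_add[symmetric])
    also have "\<dots> \<le> exp (- b * s\<^sup>2) * exp (- b * x\<^sup>2)"
      using kb(1) b0 by (intro mult_right_mono) auto
    finally have "cmod (\<psi>' x) \<le> K * (exp (- b * s\<^sup>2) * exp (- b * x\<^sup>2))"
      using Ka(2)[of x] K0 by (meson mult_left_mono order.trans)
    then have "cmod (u s) * cmod (\<psi>' x) \<le> cmod (u s) * (K * (exp (- b * s\<^sup>2) * exp (- b * x\<^sup>2)))"
      by (intro mult_left_mono) auto
    then show ?thesis using kb(2) by (simp add: Hc_def norm_mult mult_ac)
  qed
  define C where "C = (\<integral>x. exp (- b * x\<^sup>2) \<partial>lborel)"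
  have C0: "C \<ge> 0" unfolding C_def by (intro integral_nonneg_AE) auto
  have ig: "integrable lborel (\<lambda>x. exp (- b * x\<^sup>2))" by (rule integrable_gauss[OF b0])
  have integ2: "integrable lborel (\<lambda>x. Hc s x)" for s
  proof (rule Bochner_Integration.integrable_bound)
    show "integrable lborel (\<lambda>x. cmod (u s) * (K * exp (- b * s\<^sup>2)) * exp (- b * x\<^sup>2))"
      using ig by simp
    have "(\<lambda>x. Hc s x) \<in> borel_measurable borel" unfolding Hc_def Kf_def by measurable
    then show "(\<lambda>x. Hc s x) \<in> borel_measurable lborel" by simp
    show "AE x in lborel. norm (Hc s x) \<le> norm (cmod (u s) * (K * exp (- b * s\<^sup>2)) * exp (- b * x\<^sup>2))"
      using bnd K0 by (intro AE_I2) (auto intro: order.trans[OF _ abs_ge_self])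
  qed
  have integ1: "integrable lborel (\<lambda>s. \<integral>x. norm (case_prod Hc (s, x)) \<partial>lborel)"
  proof (rule Bochner_Integration.integrable_bound)
    define v where "v = (\<lambda>s. complex_of_real (K * C) * complex_of_real (exp (- b * s\<^sup>2)))"
    have gv: "gdom v"
      unfolding v_def using gdom_cmult[OF gdom_polyexp[OF b0, of 1]] by simp
    show "integrable lborel (\<lambda>s. cmod (u s) * cmod (v s))"
      by (rule L2_prod_norm_integrable[OF uL2 gdom_L2[OF gv]])
    show "(\<lambda>s. \<integral>x. norm (case_prod Hc (s, x)) \<partial>lborel) \<in> borel_measurable lborel"
      by measurable
    show "AE s in lborel. norm (\<integral>x. norm (case_prod Hc (s, x)) \<partial>lborel) \<le> norm (cmod (u s) * cmod (v s))"
    proof (intro AE_I2)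
      fix s
      have "(\<integral>x. norm (Hc s x) \<partial>lborel) \<le> (\<integral>x. cmod (u s) * (K * exp (- b * s\<^sup>2)) * exp (- b * x\<^sup>2) \<partial>lborel)"
        using integ2[of s] ig bnd by (intro integral_mono) auto
      also have "\<dots> = cmod (u s) * cmod (v s)"
        using K0 C0 by (simp add: C_def v_def norm_mult abs_mult)
      finally have "(\<integral>x. norm (Hc s x) \<partial>lborel) \<le> cmod (u s) * cmod (v s)" .
      moreover have "0 \<le> (\<integral>x. norm (Hc s x) \<partial>lborel)" by (intro integral_nonneg_AE) auto
      ultimately show "norm (\<integral>x. norm (case_prod Hc (s, x)) \<partial>lborel) \<le> norm (cmod (u s) * cmod (v s))"
        by simp
    qed
  qed
  have Hint: "integrable (lborel \<Otimes>\<^sub>M lborel) (case_prod Hc)"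
    by (rule lborel_pair.Fubini_integrable[OF Hm integ1]) (use integ2 in simp)
  have Fub: "(\<integral>x. (\<integral>s. Hc s x \<partial>lborel) \<partial>lborel) = (\<integral>s. (\<integral>x. Hc s x \<partial>lborel) \<partial>lborel)"
    by (rule lborel_pair.Fubini_integral[OF Hint])
  have intsnd: "integrable lborel (\<lambda>x. \<integral>s. Hc s x \<partial>lborel)"
    by (rule lborel_pair.integrable_snd[OF Hint])
  have inner_s: "(\<integral>s. Hc s x \<partial>lborel) = (G x - G 0) * \<psi>' x" for x
    unfolding Hc_def G_kernel[OF G, of x] by (rule integral_mult_left_zero)
  have inner_x: "(\<integral>x. Hc s x \<partial>lborel) = - (u s * \<psi> s)" if "s \<noteq> 0" for s
  proof -
    have "(\<integral>x. Hc s x \<partial>lborel) = (\<integral>x. u s * (Kf s x *\<^sub>R \<psi>' x) \<partial>lborel)"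
      unfolding Hc_def by (intro Bochner_Integration.integral_cong[OF refl]) (simp add: scaleR_conv_of_real mult_ac)
    also have "\<dots> = u s * (\<integral>x. Kf s x *\<^sub>R \<psi>' x \<partial>lborel)"
      by (rule integral_mult_right_zero)
    also have "(\<integral>x. Kf s x *\<^sub>R \<psi>' x \<partial>lborel) = - \<psi> s"
    proof (cases "s > 0")
      case True
      have "(\<integral>x. Kf s x *\<^sub>R \<psi>' x \<partial>lborel) = (\<integral>x. indicator {s<..} x *\<^sub>R \<psi>' x \<partial>lborel)"
        using True by (intro Bochner_Integration.integral_cong[OF refl]) (auto simp: Kf_def split: split_indicator)
      also have "\<dots> = - \<psi> s" by (rule int_right[OF d\<psi> g\<psi> g\<psi>'])
      finally show ?thesis .
    next
      case False
      with that have s: "s < 0" by simp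
      have "(\<integral>x. Kf s x *\<^sub>R \<psi>' x \<partial>lborel) = (\<integral>x. - (indicator {..<s} x *\<^sub>R \<psi>' x) \<partial>lborel)"
        using s by (intro Bochner_Integration.integral_cong[OF refl]) (auto simp: Kf_def split: split_indicator)
      also have "\<dots> = - \<psi> s" by (simp add: int_left[OF d\<psi> g\<psi> g\<psi>'])
      finally show ?thesis .
    qed
    finally show ?thesis by simp
  qed
  have int0: "(\<integral>x. \<psi>' x \<partial>lborel) = 0"
  proof -
    have i1: "integrable lborel (\<lambda>x. indicator {0<..} x *\<^sub>R \<psi>' x)"
      by (rule integrable_mult_indicator[OF _ gdom_integrable[OF g\<psi>']]) simp
    have i2: "integrable lborel (\<lambda>x. indicator {..<0} x *\<^sub>R \<psi>' x)"
      by (rule integrable_mult_indicator[OF _ gdom_integrable[OF g\<psi>']]) simp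
    have "(\<integral>x. \<psi>' x \<partial>lborel) = (\<integral>x. indicator {0<..} x *\<^sub>R \<psi>' x + indicator {..<0} x *\<^sub>R \<psi>' x \<partial>lborel)"
      by (rule integral_cong_AE) (use AE_lborel_singleton[of 0] in \<open>auto elim!: AE_mp split: split_indicator\<close>)
    also have "\<dots> = (\<integral>x. indicator {0<..} x *\<^sub>R \<psi>' x \<partial>lborel) + (\<integral>x. indicator {..<0} x *\<^sub>R \<psi>' x \<partial>lborel)"
      by (rule Bochner_Integration.integral_add[OF i1 i2])
    also have "\<dots> = 0" using int_right[OF d\<psi> g\<psi> g\<psi>', of 0] int_left[OF d\<psi> g\<psi> g\<psi>', of 0] by simp
    finally show ?thesis .
  qed
  have "(\<integral>x. u x * \<psi> x \<partial>lborel) = (\<integral>s. - (\<integral>x. Hc s x \<partial>lborel) \<partial>lborel)"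
    by (rule integral_cong_AE) (use AE_lborel_singleton[of 0] in \<open>auto elim!: AE_mp simp: inner_x\<close>)
  also have "\<dots> = - (\<integral>x. (\<integral>s. Hc s x \<partial>lborel) \<partial>lborel)"
    by (simp add: Fub)
  also have "(\<integral>x. (\<integral>s. Hc s x \<partial>lborel) \<partial>lborel) = (\<integral>x. (G x - G 0) * \<psi>' x \<partial>lborel)"
    by (simp add: inner_s)
  also have "\<dots> = (\<integral>x. G x * \<psi>' x \<partial>lborel)"
  proof -
    have i1: "integrable lborel (\<lambda>x. (G x - G 0) * \<psi>' x)" using intsnd by (simp add: inner_s)
    have i2: "integrable lborel (\<lambda>x. G 0 * \<psi>' x)" using gdom_integrable[OF g\<psi>'] by simp
    have "(\<integral>x. G x * \<psi>' x \<partial>lborel) = (\<integral>x. (G x - G 0) * \<psi>' x + G 0 * \<psi>' x \<partial>lborel)"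
      by (simp add: algebra_simps)
    also have "\<dots> = (\<integral>x. (G x - G 0) * \<psi>' x \<partial>lborel) + (\<integral>x. G 0 * \<psi>' x \<partial>lborel)"
      by (rule Bochner_Integration.integral_add[OF i1 i2])
    also have "(\<integral>x. G 0 * \<psi>' x \<partial>lborel) = 0" using int0 by simp
    finally show ?thesis by simp
  qed
  finally show ?thesis .
qed



lemma LBINT_cnj: "(LBINT x=a..b. cnj (g x)) = cnj (LBINT x=a..b. (g x :: complex))"
proof -
  have *: "(\<integral>x. indicator A x *\<^sub>R cnj (g x) \<partial>lborel) = cnj (\<integral>x. indicator A x *\<^sub>R g x \<partial>lborel)" for A
    by (simp add: Bochner_Integration.integral_cnj[symmetric] complex_cnj_scaleR del: Bochner_Integration.integral_cnj)
  show ?thesis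
    unfolding interval_lebesgue_integral_def set_lebesgue_integral_def by (simp add: *)
qed

lemma G_meas:
  fixes G u :: "real \<Rightarrow> complex"
  assumes G: "\<And>a b. G b - G a = (LBINT x=a..b. u x)" and um[measurable]: "u \<in> borel_measurable borel"
  shows "G \<in> borel_measurable borel"
proof -
  have "G x = G 0 + (\<integral>s. Kf s x *\<^sub>R u s \<partial>lborel)" for x
    using G_kernel[OF G, of x] by (metis add.commute diff_add_cancel)
  then have "G = (\<lambda>x. G 0 + (\<integral>s. Kf s x *\<^sub>R u s \<partial>lborel))" by (rule ext)
  moreover have "(\<lambda>x. G 0 + (\<integral>s. Kf s x *\<^sub>R u s \<partial>lborel)) \<in> borel_measurable borel"
  proof -
    have km: "(\<lambda>p. Kf (snd p) (fst p)) \<in> borel_measurable (borel \<Otimes>\<^sub>M borel)"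
      unfolding Kf_def by measurable
    have "(\<lambda>p. Kf (snd p) (fst p) *\<^sub>R u (snd p)) \<in> borel_measurable (borel \<Otimes>\<^sub>M lborel)"
      using km by measurable
    then have "case_prod (\<lambda>x s. Kf s x *\<^sub>R u s) \<in> borel_measurable (borel \<Otimes>\<^sub>M lborel)"
      by (simp add: case_prod_beta')
    from lborel.borel_measurable_lebesgue_integral[OF this]
    have "(\<lambda>x. \<integral>s. Kf s x *\<^sub>R u s \<partial>lborel) \<in> borel_measurable borel" .
    then show ?thesis by simp
  qed
  ultimately show ?thesis by simp
qed

lemma t_adj_Of: assumes c: "c > 0" shows "t_adj_graph (Of c P) (Of c (Aop c P))"
  unfolding t_adj_graph_def
proof (intro conjI allI impI)
  show "L2 (Of c P)" by (rule gdom_L2[OF gdom_Of[OF c]])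
  show "L2 (Of c (Aop c P))" by (rule gdom_L2[OF gdom_Of[OF c]])
  fix f h assume "t_graph f h"
  then obtain h0 where hL2: "L2 h" and pg: "p_graph f h0" and aeh: "ae_eq h (\<lambda>x. h0 x / of_real x)"
    unfolding t_graph_def by blast
  then obtain F where fL2: "L2 f" and h0L2: "L2 h0" and aeF: "ae_eq F f"
      and F: "\<And>a b. F b - F a = (LBINT x=a..b. \<i> * h0 x)"
    unfolding p_graph_def by blast
  define u where "u = (\<lambda>x. cnj (\<i> * h0 x))"
  define G where "G = (\<lambda>x. cnj (F x))"
  let ?\<psi> = "Ef c P" and ?\<psi>' = "Of c (dP c P)"
  have uL2: "L2 u" unfolding u_def by (rule L2_cnj[OF L2_cmult[OF h0L2]])
  have Gc: "G b - G a = (LBINT x=a..b. u x)" for a b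
  proof -
    have "cnj (F b) - cnj (F a) = cnj (F b - F a)" by simp
    also have "\<dots> = cnj (LBINT x=a..b. \<i> * h0 x)" by (simp only: F)
    also have "\<dots> = (LBINT x=a..b. cnj (\<i> * h0 x))" by (simp only: LBINT_cnj)
    finally show ?thesis unfolding G_def u_def .
  qed
  have ib: "(\<integral>x. u x * ?\<psi> x \<partial>lborel) = - (\<integral>x. G x * ?\<psi>' x \<partial>lborel)"
    by (rule ibp[OF uL2 Gc Ef_deriv gdom_Ef[OF c] gdom_Of[OF c]])
  note [measurable] = L2_meas[OF hL2] L2_meas[OF h0L2] L2_meas[OF fL2]
    gdom_meas_borel[OF gdom_Of[OF c]] gdom_meas_borel[OF gdom_Ef[OF c]]
  have Fm[measurable]: "F \<in> borel_measurable borel"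
    by (rule G_meas[OF F]) measurable
  have "l2inner h (Of c P) = (\<integral>x. \<i> * (u x * ?\<psi> x) \<partial>lborel)"
    unfolding l2inner_def
  proof (rule integral_cong_AE)
    show "AE x in lborel. cnj (h x) * Of c P x = \<i> * (u x * Ef c P x)"
      using aeh AE_lborel_singleton[of 0] unfolding ae_eq_def
      by eventually_elim (auto simp: u_def Of_def Ef_def mult.assoc complex_i_mult_minus)
    show "(\<lambda>x. cnj (h x) * Of c P x) \<in> borel_measurable lborel" by measurable
    show "(\<lambda>x. \<i> * (u x * Ef c P x)) \<in> borel_measurable lborel" unfolding u_def by measurable
  qed
  also have "\<dots> = \<i> * (\<integral>x. u x * ?\<psi> x \<partial>lborel)" by (rule integral_mult_right_zero)
  also have "\<dots> = - \<i> * (\<integral>x. G x * ?\<psi>' x \<partial>lborel)" by (simp add: ib)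
  also have "\<dots> = (\<integral>x. cnj (f x) * Of c (Aop c P) x \<partial>lborel)"
  proof -
    have "(\<integral>x. cnj (f x) * Of c (Aop c P) x \<partial>lborel) = (\<integral>x. - \<i> * (G x * ?\<psi>' x) \<partial>lborel)"
    proof (rule integral_cong_AE)
      show "AE x in lborel. cnj (f x) * Of c (Aop c P) x = - \<i> * (G x * Of c (dP c P) x)"
        using aeF unfolding ae_eq_def
        by eventually_elim (auto simp: G_def Aop_def Of_def algebra_simps)
      show "(\<lambda>x. cnj (f x) * Of c (Aop c P) x) \<in> borel_measurable lborel" by measurable
      show "(\<lambda>x. - \<i> * (G x * Of c (dP c P) x)) \<in> borel_measurable lborel" unfolding G_def by measurable
    qed
    also have "\<dots> = - \<i> * (\<integral>x. G x * ?\<psi>' x \<partial>lborel)" by (rule integral_mult_right_zero)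
    finally show ?thesis by simp
  qed
  finally show "l2inner h (Of c P) = l2inner f (Of c (Aop c P))"
    unfolding l2inner_def .
qed

lemma pow_t_Of: assumes c: "c > 0"
  shows "pow_graph t_adj_graph n (Of c P) (Of c ((Aop c ^^ n) P))"
proof (induction n arbitrary: P)
  case 0
  then show ?case using gdom_L2[OF gdom_Of[OF c]] by (simp add: ae_eq_def)
next
  case (Suc n)
  show ?case
    using t_adj_Of[OF c, of P] Suc[of "Aop c P"] by (auto simp: funpow_Suc_right simp del: funpow.simps)
qed



lemma pascal:
  fixes A B :: "'a::comm_ring_1" and u :: "nat \<Rightarrow> 'a"
  shows "A * (\<Sum>j\<le>k. of_nat (k choose j) * A^(k-j) * B^j * u j)
       + B * (\<Sum>j\<le>k. of_nat (k choose j) * A^(k-j) * B^j * u (Suc j))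
       = (\<Sum>j\<le>Suc k. of_nat (Suc k choose j) * A^(Suc k - j) * B^j * u j)"
proof -
  let ?S1 = "(\<Sum>i\<le>k. of_nat (Suc k choose Suc i) * A^(k - i) * B^(Suc i) * u (Suc i))"
  let ?S2 = "(\<Sum>i\<le>k. of_nat (k choose i) * A^(k - i) * B^(Suc i) * u (Suc i))"
  let ?S3 = "(\<Sum>i\<le>k. of_nat (k choose Suc i) * A^(k - i) * B^(Suc i) * u (Suc i))"
  have e1: "(\<Sum>j\<le>Suc k. of_nat (Suc k choose j) * A^(Suc k - j) * B^j * u j) = A^(Suc k) * u 0 + ?S1"
    by (subst sum.atMost_Suc_shift) simp
  have e2: "?S1 = ?S2 + ?S3"
    by (simp add: sum.distrib[symmetric] algebra_simps)
  have e3: "?S2 = B * (\<Sum>j\<le>k. of_nat (k choose j) * A^(k-j) * B^j * u (Suc j))"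
    by (simp add: sum_distrib_left algebra_simps)
  have e4: "A^(Suc k) * u 0 + ?S3 = (\<Sum>j\<le>Suc k. of_nat (k choose j) * A^(Suc k - j) * B^j * u j)"
    by (subst sum.atMost_Suc_shift) simp
  have e5: "(\<Sum>j\<le>Suc k. of_nat (k choose j) * A^(Suc k - j) * B^j * u j) = (\<Sum>j\<le>k. of_nat (k choose j) * A^(Suc k - j) * B^j * u j)"
    by (simp add: binomial_eq_0)
  have e6: "(\<Sum>j\<le>k. of_nat (k choose j) * A^(Suc k - j) * B^j * u j) = A * (\<Sum>j\<le>k. of_nat (k choose j) * A^(k-j) * B^j * u j)"
    by (auto simp: sum_distrib_left Suc_diff_le mult_ac intro!: sum.cong)
  have "(\<Sum>j\<le>Suc k. of_nat (Suc k choose j) * A^(Suc k - j) * B^j * u j) = A^(Suc k) * u 0 + (?S2 + ?S3)"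
    by (simp only: e1 e2)
  also have "\<dots> = ?S2 + (A^(Suc k) * u 0 + ?S3)" by (rule add.left_commute)
  also have "\<dots> = B * (\<Sum>j\<le>k. of_nat (k choose j) * A^(k-j) * B^j * u (Suc j)) + A * (\<Sum>j\<le>k. of_nat (k choose j) * A^(k-j) * B^j * u j)"
    by (simp only: e3 e4 e5 e6)
  finally show ?thesis by (simp only: add.commute)
qed

lemma div_le_self': "0 \<le> (y::real) \<Longrightarrow> y / (1 + real n) \<le> y"
  by (simp add: field_simps)

definition fc :: "nat \<Rightarrow> real" where "fc k = (if odd k then 1 / real k else 0)"
definition bc :: "nat \<Rightarrow> nat \<Rightarrow> real" where "bc j m = fc (m + j) * real (m + j choose j)"
definition Ld :: "nat \<Rightarrow> real \<Rightarrow> real" where "Ld j a = 2 * fact j * (\<Sum>m. bc j m * a^m)"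

lemma fc_bound: "\<bar>fc k\<bar> \<le> 1"
  by (auto simp: fc_def elim!: oddE)

lemma diffs_bc: "diffs (bc j) = (\<lambda>m. real (Suc j) * bc (Suc j) m)"
proof
  fix m
  have "Suc m * (Suc (m + j) choose j) = Suc (m + j) * (m + j choose j)"
    using binomial_absorb_comp[of "Suc (m+j)" j] by (simp add: Suc_diff_le)
  also have "\<dots> = (Suc (m + j) choose Suc j) * Suc j"
    by (rule Suc_times_binomial_eq)
  finally have "real (Suc m) * real (Suc (m + j) choose j) = real (Suc j) * real (Suc (m + j) choose Suc j)"
    by (metis of_nat_mult mult.commute)
  then show "diffs (bc j) m = real (Suc j) * bc (Suc j) m"
    by (simp add: diffs_def bc_def mult_ac)
qed

lemma summable_bc: "\<bar>x\<bar> < 1 \<Longrightarrow> summable (\<lambda>m. bc j m * x^m)"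
proof (induction j arbitrary: x)
  case 0
  show ?case
  proof (rule summable_comparison_test)
    show "\<exists>N. \<forall>n\<ge>N. norm (bc 0 n * x ^ n) \<le> \<bar>x\<bar>^n"
      using fc_bound by (auto simp: bc_def abs_mult power_abs intro!: mult_left_le_one_le)
    show "summable (\<lambda>n. \<bar>x\<bar>^n)" using 0 by (intro summable_geometric) simp
  qed
next
  case (Suc j)
  have "summable (\<lambda>m. diffs (bc j) m * x^m)"
    by (rule termdiff_converges[of x 1]) (use Suc in auto)
  then have "summable (\<lambda>m. real (Suc j) * (bc (Suc j) m * x^m))"
    by (simp add: diffs_bc mult.assoc)
  then show ?case by simp
qed

lemma Ld_deriv: assumes "\<bar>a\<bar> < 1" shows "(Ld j has_real_derivative Ld (Suc j) a) (at a)"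
proof -
  define K where "K = (1 + \<bar>a\<bar>) / 2"
  have K: "\<bar>K\<bar> < 1" "\<bar>a\<bar> < \<bar>K\<bar>" using assms by (auto simp: K_def)
  have "((\<lambda>x. \<Sum>m. bc j m * x^m) has_real_derivative (\<Sum>m. diffs (bc j) m * a^m)) (at a)"
    by (rule termdiffs_strong[OF summable_bc[OF K(1)]]) (use K in simp)
  moreover have "(\<Sum>m. diffs (bc j) m * a^m) = real (Suc j) * (\<Sum>m. bc (Suc j) m * a^m)"
    unfolding diffs_bc using summable_bc[OF assms, of "Suc j"]
    by (subst suminf_mult[symmetric]) (auto simp: mult.assoc)
  ultimately have "((\<lambda>x. \<Sum>m. bc j m * x^m) has_real_derivative real (Suc j) * (\<Sum>m. bc (Suc j) m * a^m)) (at a)"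
    by simp
  then have "((\<lambda>x. 2 * fact j * (\<Sum>m. bc j m * x^m)) has_real_derivative 2 * fact j * (real (Suc j) * (\<Sum>m. bc (Suc j) m * a^m))) (at a)"
    by (rule DERIV_cmult)
  then show ?thesis by (simp add: Ld_def[abs_def] mult_ac)
qed

lemma Ld0: assumes a: "\<bar>a\<bar> < 1" shows "Ld 0 a = ln ((1 + a) / (1 - a))"
proof -
  define f1 where "f1 = (\<lambda>n. (-1)^n * (1 / real (n + 1)) * a^(Suc n))"
  define f2 where "f2 = (\<lambda>n. (-1)^n * (1 / real (n + 1)) * (-a)^(Suc n))"
  have a1: "0 < 1 + a" "1 + a < 2" "0 < 1 - a" "1 - a < 2" using a by (auto simp: abs_less_iff)
  have l1: "ln (1 + a) = suminf f1" unfolding f1_def using ln_series[OF a1(1,2)] by simp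
  have l2: "ln (1 - a) = suminf f2" unfolding f2_def using ln_series[OF a1(3,4)] by simp
  have sg: "summable (\<lambda>n. \<bar>a\<bar>^Suc n)" using a by (simp add: summable_geometric)
  have nb: "\<bar>(-1::real)^n * (1 / real (n + 1)) * z\<bar> \<le> \<bar>z\<bar>" for n z
  proof -
    have "\<bar>(-1::real)^n * (1 / real (n + 1)) * z\<bar> = (1 / real (n + 1)) * \<bar>z\<bar>"
      by (simp add: abs_mult)
    also have "\<dots> \<le> 1 * \<bar>z\<bar>" by (intro mult_right_mono) auto
    finally show ?thesis by simp
  qed
  have s1: "summable f1"
  proof (rule summable_comparison_test[OF _ sg])
    show "\<exists>N. \<forall>n\<ge>N. norm (f1 n) \<le> \<bar>a\<bar>^Suc n"
    proof (intro exI allI impI)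
      fix n :: nat
      show "norm (f1 n) \<le> \<bar>a\<bar>^Suc n"
        using nb[of n "a^Suc n"] unfolding f1_def by (simp only: real_norm_def power_abs)
    qed
  qed
  have s2: "summable f2"
  proof (rule summable_comparison_test[OF _ sg])
    show "\<exists>N. \<forall>n\<ge>N. norm (f2 n) \<le> \<bar>a\<bar>^Suc n"
    proof (intro exI allI impI)
      fix n :: nat
      show "norm (f2 n) \<le> \<bar>a\<bar>^Suc n"
        using nb[of n "(-a)^Suc n"] unfolding f2_def by (simp only: real_norm_def power_abs abs_minus_cancel)
    qed
  qed
  have "ln ((1 + a) / (1 - a)) = ln (1 + a) - ln (1 - a)" using a1 by (simp add: ln_div)
  also have "\<dots> = (\<Sum>n. f1 n - f2 n)" using l1 l2 suminf_diff[OF s1 s2] by simp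
  also have "(\<lambda>n. f1 n - f2 n) = (\<lambda>n. 2 * (fc (Suc n) * a^(Suc n)))"
  proof
    fix n
    have e: "f1 n - f2 n = (-1)^n * (1 / real (n + 1)) * (a^Suc n - (-a)^Suc n)"
      by (simp add: f1_def f2_def ring_distribs add_divide_distrib diff_divide_distrib)
    show "f1 n - f2 n = 2 * (fc (Suc n) * a^(Suc n))"
    proof (cases "even n")
      case True
      then have "(-1::real)^n = 1" "(-a)^Suc n = - (a^Suc n)" by (simp_all add: power_minus_odd)
      then show ?thesis using True unfolding e by (simp add: fc_def)
    next
      case False
      then have "(-a)^Suc n = a^Suc n" by (simp add: power_minus_even)
      then show ?thesis using False unfolding e by (simp add: fc_def)
    qed
  qed
  also have "(\<Sum>n. 2 * (fc (Suc n) * a^(Suc n))) = 2 * (\<Sum>n. fc (Suc n) * a^(Suc n))"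
  proof (rule suminf_mult)
    have "summable (\<lambda>m. bc 0 m * a^m)" by (rule summable_bc[OF a])
    then have "summable (\<lambda>m. fc m * a^m)" by (simp add: bc_def)
    then show "summable (\<lambda>n. fc (Suc n) * a^(Suc n))" using summable_Suc_iff[of "\<lambda>m. fc m * a^m"] by simp
  qed
  also have "(\<Sum>n. fc (Suc n) * a^(Suc n)) = (\<Sum>m. bc 0 m * a^m)"
    using suminf_split_head[OF summable_bc[OF a, of 0]] by (simp add: bc_def fc_def)
  finally show ?thesis by (simp add: Ld_def)
qed



lemma Tcal_formula:
  fixes \<epsilon> x :: real
  assumes "\<bar>a\<bar> < 1"
  shows "(Tcal \<epsilon> ^^ k) logfun x a = (\<Sum>j\<le>k. of_nat (k choose j) * (of_real (x^2))^(k-j) * (of_real (- 2 * sqrt \<epsilon>))^j * of_real (Ld j a))"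
  using assms
proof (induction k arbitrary: a)
  case 0
  then show ?case by (simp add: logfun_def Ld0)
next
  case (Suc k)
  define A :: complex where "A = of_real (x^2)"
  define B :: complex where "B = of_real (- 2 * sqrt \<epsilon>)"
  define S where "S = (\<lambda>b. (\<Sum>j\<le>k. of_nat (k choose j) * A^(k-j) * B^j * of_real (Ld j b)))"
  define S' where "S' = (\<Sum>j\<le>k. of_nat (k choose j) * A^(k-j) * B^j * of_real (Ld (Suc j) a))"
  have "(S has_vector_derivative S') (at a)"
    unfolding S_def S'_def
    by (intro has_vector_derivative_sum has_vector_derivative_mult_right has_vector_derivative_of_real Ld_deriv Suc.prems)
  then have "((\<lambda>b. (Tcal \<epsilon> ^^ k) logfun x b) has_vector_derivative S') (at a)"
  proof (rule has_vector_derivative_transform_within_open[of _ _ _ "{-1<..<1}"])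
    show "a \<in> {-1<..<1}" using Suc.prems by (simp add: abs_less_iff)
    show "\<And>y. y \<in> {-1<..<1} \<Longrightarrow> S y = (Tcal \<epsilon> ^^ k) logfun x y"
      using Suc.IH by (simp add: S_def A_def B_def abs_less_iff)
  qed simp
  then have vd: "vector_derivative (\<lambda>b. (Tcal \<epsilon> ^^ k) logfun x b) (at a) = S'"
    by (rule vector_derivative_at)
  have "(Tcal \<epsilon> ^^ Suc k) logfun x a = A * (Tcal \<epsilon> ^^ k) logfun x a - of_real (2 * sqrt \<epsilon>) * vector_derivative (\<lambda>b. (Tcal \<epsilon> ^^ k) logfun x b) (at a)"
    by (simp only: funpow.simps o_def Tcal_def A_def)
  also have "\<dots> = A * S a + B * S'"
    using Suc.IH[OF Suc.prems] vd by (simp add: S_def A_def B_def)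
  also have "\<dots> = (\<Sum>j\<le>Suc k. of_nat (Suc k choose j) * A^(Suc k - j) * B^j * of_real (Ld j a))"
    unfolding S_def S'_def by (rule pascal)
  finally show ?case by (simp add: A_def B_def)
qed

lemma poly_Aop: "s \<noteq> 0 \<Longrightarrow> poly (Aop c Q) y = \<i> / of_real s * (of_real (2 * c * s) * poly Q y + of_real (-2 * s) * poly (pderiv Q) y)"
  by (simp add: Aop_def dP_def field_simps)

lemma pderiv_Aop: "pderiv (Aop c Q) = Aop c (pderiv Q)"
  by (simp add: Aop_def dP_def pderiv_smult pderiv_diff pderiv_minus)

lemma hpderiv_Aop: "(pderiv^^j) (Aop c Q) = Aop c ((pderiv^^j) Q)"
  by (induction j) (simp_all add: pderiv_Aop)

lemma Aop_pow_poly: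
  assumes s: "s \<noteq> 0"
  shows "poly ((Aop c ^^ k) P) y = (\<i> / of_real s)^k * (\<Sum>j\<le>k. of_nat (k choose j) * (of_real (2 * c * s))^(k-j) * (of_real (-2 * s))^j * poly ((pderiv^^j) P) y)"
proof (induction k arbitrary: P)
  case 0 then show ?case by simp
next
  case (Suc k)
  define A :: complex where "A = of_real (2 * c * s)"
  define B :: complex where "B = of_real (-2 * s)"
  define u where "u = (\<lambda>j. poly ((pderiv^^j) P) y)"
  have "poly ((Aop c ^^ Suc k) P) y = poly ((Aop c ^^ k) (Aop c P)) y"
    by (simp only: funpow_Suc_right o_def)
  also have "\<dots> = (\<i> / of_real s)^k * (\<Sum>j\<le>k. of_nat (k choose j) * A^(k-j) * B^j * ((\<i> / of_real s) * (A * u j + B * u (Suc j))))"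
    unfolding Suc.IH hpderiv_Aop poly_Aop[OF s] by (simp add: A_def B_def u_def)
  also have "\<dots> = (\<i> / of_real s)^(Suc k) * (A * (\<Sum>j\<le>k. of_nat (k choose j) * A^(k-j) * B^j * u j) + B * (\<Sum>j\<le>k. of_nat (k choose j) * A^(k-j) * B^j * u (Suc j)))"
    by (simp add: sum_distrib_left sum.distrib algebra_simps)
  also have "\<dots> = (\<i> / of_real s)^(Suc k) * (\<Sum>j\<le>Suc k. of_nat (Suc k choose j) * A^(Suc k - j) * B^j * u j)"
    by (simp only: pascal)
  finally show ?case by (simp add: A_def B_def u_def)
qed

lemma hpm: "(pderiv^^j) (monom a k) = monom (a * of_nat ((k choose j) * fact j)) (k - j)"
proof (induction j)
  case 0 then show ?case by simp
next
  case (Suc j)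
  have b: "(k - j) * (k choose j) = Suc j * (k choose Suc j)"
    using binomial_absorb_comp[of k j] binomial_absorption[of j k] by simp
  have "(pderiv^^Suc j) (monom a k) = monom (of_nat (k - j) * (a * of_nat ((k choose j) * fact j))) (k - j - 1)"
    by (simp add: Suc pderiv_monom)
  also have "of_nat (k - j) * (a * of_nat ((k choose j) * fact j)) = a * of_nat ((k choose Suc j) * fact (Suc j))"
  proof -
    have "(k - j) * ((k choose j) * fact j) = ((k - j) * (k choose j)) * fact j"
      by (simp only: mult.assoc)
    also have "\<dots> = (Suc j * (k choose Suc j)) * fact j" unfolding b ..
    also have "\<dots> = (k choose Suc j) * (Suc j * fact j)" by (simp only: mult_ac)
    also have "\<dots> = (k choose Suc j) * fact (Suc j)" by (simp only: fact_Suc of_nat_id)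
    finally have "(k - j) * ((k choose j) * fact j) = (k choose Suc j) * fact (Suc j)" .
    then have "of_nat ((k - j) * ((k choose j) * fact j)) = (of_nat ((k choose Suc j) * fact (Suc j)) :: 'a)"
      by simp
    then show ?thesis by (simp only: of_nat_mult mult_ac)
  qed
  finally show ?case by simp
qed

lemma poly_hpd: "poly ((pderiv^^j) P) y = (\<Sum>k\<le>degree P. coeff P k * of_nat ((k choose j) * fact j) * y^(k-j))"
proof -
  have "(pderiv^^j) P = (pderiv^^j) (\<Sum>k\<le>degree P. monom (coeff P k) k)"
    by (simp add: poly_as_sum_of_monoms)
  also have "\<dots> = (\<Sum>k\<le>degree P. monom (coeff P k * of_nat ((k choose j) * fact j)) (k - j))"
    by (simp add: higher_pderiv_sum hpm)
  finally show ?thesis by (simp add: poly_sum poly_monom)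
qed

lemma hpd_zero: "j > degree P \<Longrightarrow> poly ((pderiv^^j) P) y = 0"
  unfolding poly_hpd by (auto intro!: sum.neutral simp: binomial_eq_0)

lemma sum_ext_bound:
  fixes d m :: nat
  assumes "\<And>j. j > d \<Longrightarrow> g j = 0" "\<And>j. j > m \<Longrightarrow> g j = 0"
  shows "(\<Sum>j\<le>m. g j) = (\<Sum>j\<le>d. g j)"
proof -
  have z1: "\<forall>i\<in>{..max m d} - {..m}. g i = 0"
  proof
    fix i assume "i \<in> {..max m d} - {..m}"
    then have "m < i" by auto
    then show "g i = 0" by (rule assms(2))
  qed
  have z2: "\<forall>i\<in>{..max m d} - {..d}. g i = 0"
  proof
    fix i assume "i \<in> {..max m d} - {..d}"
    then have "d < i" by auto
    then show "g i = 0" by (rule assms(1))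
  qed
  have "(\<Sum>j\<le>m. g j) = (\<Sum>j\<le>max m d. g j)"
    by (rule sum.mono_neutral_left[OF finite_atMost _ z1]) auto
  also have "\<dots> = (\<Sum>j\<le>d. g j)"
    by (rule sum.mono_neutral_right[OF finite_atMost _ z2]) auto
  finally show ?thesis .
qed

lemma rhoT_formula:
  assumes a: "\<bar>a\<bar> < 1"
  shows "rho_T \<epsilon> \<rho> x a = (\<Sum>j\<le>degree \<rho>. of_real ((- 2 * sqrt \<epsilon>)^j * Ld j a / fact j) * poly ((pderiv^^j) \<rho>) (of_real (x^2)))"
proof -
  define A :: complex where "A = of_real (x^2)"
  define B :: complex where "B = of_real (- 2 * sqrt \<epsilon>)"
  define d where "d = degree \<rho>"
  define f where "f = (\<lambda>k j. coeff \<rho> k * (of_nat (k choose j) * A^(k-j) * B^j * of_real (Ld j a)))"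
  have "rho_T \<epsilon> \<rho> x a = (\<Sum>k\<le>d. \<Sum>j\<le>k. f k j)"
    unfolding rho_T_def Tcal_formula[OF a] f_def A_def B_def d_def by (simp add: sum_distrib_left)
  also have "\<dots> = (\<Sum>k\<le>d. \<Sum>j\<le>d. f k j)"
    by (intro sum.cong refl sum_ext_bound) (auto simp: f_def binomial_eq_0)
  also have "\<dots> = (\<Sum>j\<le>d. \<Sum>k\<le>d. f k j)" by (rule sum.swap)
  also have "\<dots> = (\<Sum>j\<le>d. of_real ((- 2 * sqrt \<epsilon>)^j * Ld j a / fact j) * poly ((pderiv^^j) \<rho>) A)"
  proof (intro sum.cong refl)
    fix j
    have "of_real ((- 2 * sqrt \<epsilon>)^j * Ld j a / fact j) * poly ((pderiv^^j) \<rho>) A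
        = (\<Sum>k\<le>d. of_real ((- 2 * sqrt \<epsilon>)^j * Ld j a / fact j) * (coeff \<rho> k * of_nat ((k choose j) * fact j) * A^(k-j)))"
      unfolding poly_hpd d_def by (simp add: sum_distrib_left)
    also have "\<dots> = (\<Sum>k\<le>d. f k j)"
      by (intro sum.cong refl) (simp add: f_def B_def field_simps)
    finally show "(\<Sum>k\<le>d. f k j) = of_real ((- 2 * sqrt \<epsilon>)^j * Ld j a / fact j) * poly ((pderiv^^j) \<rho>) A" by simp
  qed
  finally show ?thesis by (simp add: A_def d_def)
qed



definition br :: "real \<Rightarrow> nat \<Rightarrow> nat \<Rightarrow> real" where
  "br \<alpha> N j = (\<Sum>n\<le>N. 1 / real (2*n+1) * real (2*n+1 choose j) * \<alpha>^(2*n+1-j))"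

lemma coef_simp:
  assumes s: "s > 0"
  shows "of_real ((-1)^n / real (2*n+1) * s^(2*n+1)) * (\<i> / of_real s)^(2*n+1) = \<i> / of_real (real (2*n+1))"
proof -
  have i: "\<i>^(2*n+1) = \<i> * (-1)^n" by (simp add: power_add power_mult)
  have m: "((-1::complex)^n) * (-1)^n = 1" by (simp add: power_mult_distrib[symmetric])
  have "of_real ((-1)^n / real (2*n+1) * s^(2*n+1)) * (\<i> / of_real s)^(2*n+1)
      = ((-1)^n * (-1)^n) * \<i> / of_real (real (2*n+1)) * (of_real s^(2*n+1) / of_real s^(2*n+1))"
    by (simp add: power_divide i field_simps)
  also have "\<dots> = \<i> / of_real (real (2*n+1))" using s by (simp add: m)
  finally show ?thesis .
qed

lemma series_pw:
  assumes s: "s > 0"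
  shows "(\<Sum>n\<le>N. of_real ((-1)^n / real (2*n+1) * s^(2*n+1)) * poly ((Aop (\<alpha>/(2* s)) ^^ (2*n+1)) \<rho>) y)
       = (\<Sum>j\<le>degree \<rho>. \<i> * of_real ((-2 * s)^j * br \<alpha> N j) * poly ((pderiv^^j) \<rho>) y)"
proof -
  define d where "d = degree \<rho>"
  define u where "u = (\<lambda>j. poly ((pderiv^^j) \<rho>) y)"
  have cs: "2 * (\<alpha>/(2* s)) * s = \<alpha>" using s by simp
  define t where "t = (\<lambda>n j. \<i> / of_real (real (2*n+1)) * (of_nat (2*n+1 choose j) * (of_real \<alpha>)^(2*n+1-j) * (of_real (-2 * s))^j * u j))"
  have "of_real ((-1)^n / real (2*n+1) * s^(2*n+1)) * poly ((Aop (\<alpha>/(2* s)) ^^ (2*n+1)) \<rho>) y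
      = (\<Sum>j\<le>d. t n j)" for n
  proof -
    have "of_real ((-1)^n / real (2*n+1) * s^(2*n+1)) * poly ((Aop (\<alpha>/(2* s)) ^^ (2*n+1)) \<rho>) y
        = (of_real ((-1)^n / real (2*n+1) * s^(2*n+1)) * (\<i> / of_real s)^(2*n+1)) *
          (\<Sum>j\<le>2*n+1. of_nat (2*n+1 choose j) * (of_real \<alpha>)^(2*n+1-j) * (of_real (-2 * s))^j * u j)"
      unfolding Aop_pow_poly[of s, OF less_imp_neq[OF s, symmetric]] cs u_def by (simp only: mult.assoc)
    also have "\<dots> = (\<Sum>j\<le>2*n+1. t n j)"
      unfolding coef_simp[OF s] t_def by (simp only: sum_distrib_left)
    also have "\<dots> = (\<Sum>j\<le>d. t n j)"
      by (rule sum_ext_bound) (auto simp: t_def u_def d_def hpd_zero binomial_eq_0)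
    finally show ?thesis .
  qed
  then have "(\<Sum>n\<le>N. of_real ((-1)^n / real (2*n+1) * s^(2*n+1)) * poly ((Aop (\<alpha>/(2* s)) ^^ (2*n+1)) \<rho>) y)
      = (\<Sum>n\<le>N. \<Sum>j\<le>d. t n j)" by simp
  also have "\<dots> = (\<Sum>j\<le>d. \<Sum>n\<le>N. t n j)" by (rule sum.swap)
  also have "\<dots> = (\<Sum>j\<le>d. \<i> * of_real ((-2 * s)^j * br \<alpha> N j) * u j)"
  proof (intro sum.cong refl)
    fix j
    show "(\<Sum>n\<le>N. t n j) = \<i> * of_real ((-2 * s)^j * br \<alpha> N j) * u j"
      unfolding br_def t_def by (simp add: sum_distrib_left sum_distrib_right mult_ac)
  qed
  finally show ?thesis by (simp add: d_def u_def)
qed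

lemma sum_even_odd: "(\<Sum>k<2 * Suc N. g k) = (\<Sum>n\<le>N. g (2*n) + g (2*n+1))"
proof (induction N)
  case 0 then show ?case by (simp add: numeral_2_eq_2)
next
  case (Suc N) then show ?case by (simp add: add_ac)
qed

lemma sum_shift_j: "(\<Sum>k<K. fc k * real (k choose j) * \<alpha>^(k-j)) = (\<Sum>m<K-j. bc j m * \<alpha>^m)"
proof (induction K)
  case 0 then show ?case by simp
next
  case (Suc K)
  show ?case
  proof (cases "K < j")
    case True
    then have "Suc K - j = K - j" by simp
    then show ?thesis using Suc True by (simp add: binomial_eq_0)
  next
    case False
    then have e: "Suc K - j = Suc (K - j)" by simp
    have b: "bc j (K - j) = fc K * real (K choose j)" using False by (simp add: bc_def)
    have "(\<Sum>k<Suc K. fc k * real (k choose j) * \<alpha>^(k-j)) = (\<Sum>k<K. fc k * real (k choose j) * \<alpha>^(k-j)) + fc K * real (K choose j) * \<alpha>^(K-j)"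
      by simp
    also have "\<dots> = (\<Sum>m<K-j. bc j m * \<alpha>^m) + bc j (K - j) * \<alpha>^(K-j)"
      by (simp only: Suc.IH b)
    also have "\<dots> = (\<Sum>m<Suc K - j. bc j m * \<alpha>^m)" by (simp only: e sum.lessThan_Suc)
    finally show ?thesis .
  qed
qed

lemma br_lim: assumes a: "\<bar>\<alpha>\<bar> < 1" shows "(\<lambda>N. br \<alpha> N j) \<longlonglongrightarrow> Ld j \<alpha> / (2 * fact j)"
proof -
  have eq: "br \<alpha> N j = (\<Sum>m<2 * Suc N - j. bc j m * \<alpha>^m)" for N
  proof -
    have "br \<alpha> N j = (\<Sum>k<2 * Suc N. fc k * real (k choose j) * \<alpha>^(k-j))"
      unfolding sum_even_odd br_def by (intro sum.cong refl) (simp add: fc_def)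
    then show ?thesis by (simp only: sum_shift_j)
  qed
  have lim: "(\<lambda>M. \<Sum>m<M. bc j m * \<alpha>^m) \<longlonglongrightarrow> (\<Sum>m. bc j m * \<alpha>^m)"
    by (rule summable_LIMSEQ[OF summable_bc[OF a]])
  have fl: "filterlim (\<lambda>N. 2 * Suc N - j) sequentially sequentially"
    unfolding filterlim_at_top
  proof
    fix Z :: nat
    show "eventually (\<lambda>N. Z \<le> 2 * Suc N - j) sequentially"
      by (rule eventually_sequentiallyI[of "Z + j"]) simp
  qed
  have "(\<lambda>N. \<Sum>m<2 * Suc N - j. bc j m * \<alpha>^m) \<longlonglongrightarrow> (\<Sum>m. bc j m * \<alpha>^m)"
    using filterlim_compose[OF lim fl] by (simp add: o_def)
  moreover have "(\<Sum>m. bc j m * \<alpha>^m) = Ld j \<alpha> / (2 * fact j)"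
    by (simp add: Ld_def)
  ultimately show ?thesis by (simp add: eq)
qed

lemma full_pw:
  assumes e: "\<epsilon> > 0" and a: "\<bar>\<alpha>\<bar> < 1"
  shows "(\<Sum>n\<le>N. of_real ((-1)^n / real (2*n+1) * sqrt \<epsilon>^(2*n+1)) * poly ((Aop (\<alpha>/(2* sqrt \<epsilon>)) ^^ (2*n+1)) \<rho>) (of_real (x^2)))
       + of_real (sqrt \<epsilon>) * (- (\<i> / of_real (2 * sqrt \<epsilon>)) * rho_T \<epsilon> \<rho> x \<alpha>)
     = (\<Sum>j\<le>degree \<rho>. \<i> * of_real ((-2 * sqrt \<epsilon>)^j * (br \<alpha> N j - Ld j \<alpha> / (2 * fact j))) * poly ((pderiv^^j) \<rho>) (of_real (x^2)))"
proof -
  define s where "s = sqrt \<epsilon>"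
  have s: "s > 0" using e by (simp add: s_def)
  define u where "u = (\<lambda>j. poly ((pderiv^^j) \<rho>) (of_real (x^2)))"
  have 2: "of_real s * (- (\<i> / of_real (2 * s)) * rho_T \<epsilon> \<rho> x \<alpha>)
      = - (\<Sum>j\<le>degree \<rho>. \<i> * of_real ((-2 * s)^j * (Ld j \<alpha> / (2 * fact j))) * u j)"
    unfolding rhoT_formula[OF a] s_def[symmetric] u_def
    using s by (simp add: sum_distrib_left field_simps sum_negf)
  show ?thesis
    unfolding s_def[symmetric] series_pw[OF s] 2
    by (simp add: u_def sum_subtractf[symmetric] algebra_simps)
qed



lemma L2_sum_meas:
  assumes uL2: "\<And>j. j \<in> J \<Longrightarrow> L2 (u j)"
  shows "(\<lambda>x. \<Sum>j\<in>J. a j * u j x) \<in> borel_measurable borel"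
proof (rule borel_measurable_sum)
  fix j assume "j \<in> J"
  then have [measurable]: "u j \<in> borel_measurable borel" using L2_meas uL2 by blast
  show "(\<lambda>x. a j * u j x) \<in> borel_measurable borel" by measurable
qed

lemma l2_tendsto:
  fixes u :: "'i \<Rightarrow> real \<Rightarrow> complex" and a :: "nat \<Rightarrow> 'i \<Rightarrow> complex"
  assumes J: "finite J" and uL2: "\<And>j. j \<in> J \<Longrightarrow> L2 (u j)"
    and a0: "\<And>j. j \<in> J \<Longrightarrow> ((\<lambda>N. a N j) \<longlongrightarrow> 0) sequentially"
  shows "(\<lambda>N. l2norm (\<lambda>x. \<Sum>j\<in>J. a N j * u j x)) \<longlonglongrightarrow> 0"
proof -
  define V where "V x = (\<Sum>j\<in>J. cmod (u j x))" for x
  have V2: "(V x)^2 = (\<Sum>j\<in>J. \<Sum>k\<in>J. cmod (u j x) * cmod (u k x))" for x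
    unfolding V_def power2_eq_square by (rule sum_product)
  have V2int: "integrable lborel (\<lambda>x. (V x)^2)"
    unfolding V2 by (intro Bochner_Integration.integrable_sum L2_prod_norm_integrable uL2) auto
  define M where "M = (\<integral>x. (V x)^2 \<partial>lborel)"
  define A where "A N = (\<Sum>j\<in>J. cmod (a N j))" for N
  have A0: "A N \<ge> 0" for N unfolding A_def by (intro sum_nonneg) auto
  have bound: "l2norm (\<lambda>x. \<Sum>j\<in>J. a N j * u j x) \<le> A N * sqrt M" for N
  proof -
    let ?f = "\<lambda>x. \<Sum>j\<in>J. a N j * u j x"
    have pw: "cmod (?f x) \<le> A N * V x" for x
    proof -
      have "cmod (?f x) \<le> (\<Sum>j\<in>J. cmod (a N j) * cmod (u j x))"
        by (rule order.trans[OF norm_sum]) (simp add: norm_mult)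
      also have "\<dots> \<le> (\<Sum>j\<in>J. A N * cmod (u j x))"
        unfolding A_def by (intro sum_mono mult_right_mono member_le_sum[OF _ _ J]) auto
      finally show ?thesis by (simp add: V_def sum_distrib_left)
    qed
    have pw2: "(cmod (?f x))^2 \<le> (A N)^2 * (V x)^2" for x
    proof -
      have "(cmod (?f x))^2 \<le> (A N * V x)^2" by (intro power_mono pw) simp
      then show ?thesis by (simp add: power_mult_distrib)
    qed
    have fm: "?f \<in> borel_measurable borel" by (rule L2_sum_meas[OF uL2])
    have int2: "integrable lborel (\<lambda>x. (A N)^2 * (V x)^2)" using V2int by simp
    have int1: "integrable lborel (\<lambda>x. (cmod (?f x))^2)"
    proof (rule Bochner_Integration.integrable_bound[OF int2])
      show "(\<lambda>x. (cmod (?f x))^2) \<in> borel_measurable lborel" using fm by simp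
      show "AE x in lborel. norm ((cmod (?f x))^2) \<le> norm ((A N)^2 * (V x)^2)"
        using pw2 by (intro AE_I2) (auto intro: order.trans[OF _ abs_ge_self])
    qed
    have "(\<integral>x. (cmod (?f x))^2 \<partial>lborel) \<le> (\<integral>x. (A N)^2 * (V x)^2 \<partial>lborel)"
      by (rule integral_mono[OF int1 int2 pw2])
    also have "\<dots> = (A N)^2 * M" by (simp add: M_def)
    finally have "l2norm ?f \<le> sqrt ((A N)^2 * M)" unfolding l2norm_def by (rule real_sqrt_le_mono)
    also have "\<dots> = A N * sqrt M" using A0[of N] by (simp add: real_sqrt_mult)
    finally show ?thesis .
  qed
  have "(\<lambda>N. A N) \<longlonglongrightarrow> (\<Sum>j\<in>J. 0)"
    unfolding A_def by (intro tendsto_sum tendsto_norm_zero a0)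
  then have "(\<lambda>N. A N * sqrt M) \<longlonglongrightarrow> 0 * sqrt M"
    by (intro tendsto_mult tendsto_const) simp
  then have lim: "(\<lambda>N. A N * sqrt M) \<longlonglongrightarrow> 0" by simp
  have nn: "0 \<le> l2norm f" for f unfolding l2norm_def by (intro real_sqrt_ge_zero integral_nonneg_AE) auto
  show ?thesis
    by (rule Lim_null_comparison[OF _ lim]) (use bound nn in auto)
qed


lemma combine:
  fixes E t g0 R :: complex
  shows "(\<Sum>n\<le>N. k n * (p n * E)) + t * (g0 * R * E) = ((\<Sum>n\<le>N. k n * p n) + t * (g0 * R)) * E"
  by (simp add: sum_distrib_left sum_distrib_right algebra_simps)

lemma distr: "(\<Sum>j\<in>B. a j * q j) * (E::complex) = (\<Sum>j\<in>B. a j * (q j * E))"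
  by (simp add: sum_distrib_right mult.assoc)

theorem lemma3p8:
  fixes \<epsilon> \<alpha> :: real and \<rho> :: "complex poly"
  assumes "0 < \<epsilon>" "\<epsilon> \<le> 1" "0 < \<alpha>" "\<alpha> < 1"
  defines "\<xi> \<equiv> (\<lambda>x::real. complex_of_real (exp (- \<alpha> * x^2 / (2 * sqrt \<epsilon>))))"
  shows "S_graph \<epsilon> (\<lambda>x. poly \<rho> (of_real (x^2)) * \<xi> x)
           (\<lambda>x. - (\<i> / of_real (2 * sqrt \<epsilon>)) * rho_T \<epsilon> \<rho> x \<alpha> * \<xi> x)
       \<and> S_adj_graph \<epsilon> (\<lambda>x. poly \<rho> (of_real (x^2)) * of_real x * \<xi> x)
           (\<lambda>x. - (\<i> / of_real (2 * sqrt \<epsilon>)) * rho_T \<epsilon> \<rho> x \<alpha> * of_real x * \<xi> x)"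
proof -
  have e: "\<epsilon> > 0" using assms by simp
  have a: "\<bar>\<alpha>\<bar> < 1" using assms by simp
  define c where "c = \<alpha> / (2 * sqrt \<epsilon>)"
  have c: "c > 0" using assms by (simp add: c_def)
  have \<xi>x: "\<xi> x = complex_of_real (exp (- c * x^2))" for x
    unfolding \<xi>_def c_def by (simp add: field_simps)
  define d where "d = degree \<rho>"
  define an where "an N j = \<i> * of_real ((-2 * sqrt \<epsilon>)^j * (br \<alpha> N j - Ld j \<alpha> / (2 * fact j)))" for N j
  have an0: "(\<lambda>N. an N j) \<longlonglongrightarrow> 0" for j
  proof -
    have "(\<lambda>N. br \<alpha> N j - Ld j \<alpha> / (2 * fact j)) \<longlonglongrightarrow> Ld j \<alpha> / (2 * fact j) - Ld j \<alpha> / (2 * fact j)"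
      by (intro tendsto_diff br_lim[OF a] tendsto_const)
    then have "(\<lambda>N. \<i> * of_real ((-2 * sqrt \<epsilon>)^j * (br \<alpha> N j - Ld j \<alpha> / (2 * fact j)))) \<longlonglongrightarrow> \<i> * of_real ((-2 * sqrt \<epsilon>)^j * 0)"
      by (intro tendsto_mult tendsto_of_real tendsto_const) simp
    then show ?thesis by (simp add: an_def)
  qed
  define \<kappa> where "\<kappa> j = - (\<i> / of_real (2 * sqrt \<epsilon>)) * of_real ((- 2 * sqrt \<epsilon>)^j * Ld j \<alpha> / fact j)" for j
  have rho_expand: "- (\<i> / of_real (2 * sqrt \<epsilon>)) * rho_T \<epsilon> \<rho> x \<alpha> * E = (\<Sum>j\<le>d. \<kappa> j * (poly ((pderiv^^j) \<rho>) (of_real (x^2)) * E))" for x E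
    unfolding rhoT_formula[OF a] d_def \<kappa>_def by (simp add: sum_distrib_left sum_distrib_right mult_ac)
  have key: "(\<Sum>n\<le>N. of_real ((-1)^n / real (2*n+1) * sqrt \<epsilon>^(2*n+1)) * (poly ((Aop c ^^ (2*n+1)) \<rho>) (of_real (x^2)) * E))
        + of_real (sqrt \<epsilon>) * (- (\<i> / of_real (2 * sqrt \<epsilon>)) * rho_T \<epsilon> \<rho> x \<alpha> * E)
      = (\<Sum>j\<le>d. an N j * (poly ((pderiv^^j) \<rho>) (of_real (x^2)) * E))" for N x E
    unfolding combine c_def full_pw[OF e a] an_def d_def by (rule distr)
  have gE: "gdom (\<lambda>x. - (\<i> / of_real (2 * sqrt \<epsilon>)) * rho_T \<epsilon> \<rho> x \<alpha> * \<xi> x)"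
  proof -
    have "(\<lambda>x. - (\<i> / of_real (2 * sqrt \<epsilon>)) * rho_T \<epsilon> \<rho> x \<alpha> * \<xi> x) = (\<lambda>x. \<Sum>j\<le>d. \<kappa> j * Ef c ((pderiv^^j) \<rho>) x)"
      unfolding rho_expand \<xi>x by (simp add: Ef_def)
    then show ?thesis by (simp add: gdom_sum gdom_cmult gdom_Ef[OF c])
  qed
  have gO: "gdom (\<lambda>x. - (\<i> / of_real (2 * sqrt \<epsilon>)) * rho_T \<epsilon> \<rho> x \<alpha> * of_real x * \<xi> x)"
  proof -
    have "(\<lambda>x. - (\<i> / of_real (2 * sqrt \<epsilon>)) * rho_T \<epsilon> \<rho> x \<alpha> * of_real x * \<xi> x) = (\<lambda>x. \<Sum>j\<le>d. \<kappa> j * Of c ((pderiv^^j) \<rho>) x)"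
      unfolding mult.assoc[of _ "of_real _" "\<xi> _"] rho_expand \<xi>x by (simp add: Of_def sum_distrib_left mult_ac)
    then show ?thesis by (simp add: gdom_sum gdom_cmult gdom_Of[OF c])
  qed
  have f1: "(\<lambda>x. poly \<rho> (of_real (x^2)) * \<xi> x) = Ef c \<rho>"
    by (simp add: Ef_def \<xi>x fun_eq_iff)
  have f2: "(\<lambda>x. poly \<rho> (of_real (x^2)) * of_real x * \<xi> x) = Of c \<rho>"
    by (simp add: Of_def \<xi>x fun_eq_iff)
  have S1: "S_graph \<epsilon> (\<lambda>x. poly \<rho> (of_real (x^2)) * \<xi> x)
           (\<lambda>x. - (\<i> / of_real (2 * sqrt \<epsilon>)) * rho_T \<epsilon> \<rho> x \<alpha> * \<xi> x)"
    unfolding S_graph_def arctan_graph_def f1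
  proof (intro conjI exI[of _ "\<lambda>n. Ef c ((Aop c ^^ (2*n+1)) \<rho>)"] allI)
    show "even_fun (Ef c \<rho>)" by (rule even_Ef[OF c])
    show "L2 (Ef c \<rho>)" by (rule gdom_L2[OF gdom_Ef[OF c]])
    show "L2 (\<lambda>x. - (\<i> / of_real (2 * sqrt \<epsilon>)) * rho_T \<epsilon> \<rho> x \<alpha> * \<xi> x)" by (rule gdom_L2[OF gE])
    show "pow_graph t_graph (2 * n + 1) (Ef c \<rho>) (Ef c ((Aop c ^^ (2 * n + 1)) \<rho>))" for n
      by (rule pow_t_Ef[OF c])
    have ex: "(\<Sum>n\<le>N. of_real ((-1)^n / real (2*n+1) * sqrt \<epsilon>^(2*n+1)) * Ef c ((Aop c ^^ (2*n+1)) \<rho>) x)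
        + of_real (sqrt \<epsilon>) * (- (\<i> / of_real (2 * sqrt \<epsilon>)) * rho_T \<epsilon> \<rho> x \<alpha> * \<xi> x)
      = (\<Sum>j\<le>d. an N j * Ef c ((pderiv^^j) \<rho>) x)" for N x
      unfolding Ef_def \<xi>x by (rule key)
    show "(\<lambda>N. l2norm (\<lambda>x. (\<Sum>n\<le>N. of_real ((-1)^n / real (2*n+1) * sqrt \<epsilon>^(2*n+1)) * Ef c ((Aop c ^^ (2*n+1)) \<rho>) x)
        + of_real (sqrt \<epsilon>) * (- (\<i> / of_real (2 * sqrt \<epsilon>)) * rho_T \<epsilon> \<rho> x \<alpha> * \<xi> x))) \<longlonglongrightarrow> 0"
      unfolding ex by (rule l2_tendsto[OF finite_atMost gdom_L2[OF gdom_Ef[OF c]] an0])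
  qed
  have S2: "S_adj_graph \<epsilon> (\<lambda>x. poly \<rho> (of_real (x^2)) * of_real x * \<xi> x)
           (\<lambda>x. - (\<i> / of_real (2 * sqrt \<epsilon>)) * rho_T \<epsilon> \<rho> x \<alpha> * of_real x * \<xi> x)"
    unfolding S_adj_graph_def arctan_graph_def f2
  proof (intro conjI exI[of _ "\<lambda>n. Of c ((Aop c ^^ (2*n+1)) \<rho>)"] allI)
    show "odd_fun (Of c \<rho>)" by (rule odd_Of[OF c])
    show "L2 (Of c \<rho>)" by (rule gdom_L2[OF gdom_Of[OF c]])
    show "L2 (\<lambda>x. - (\<i> / of_real (2 * sqrt \<epsilon>)) * rho_T \<epsilon> \<rho> x \<alpha> * of_real x * \<xi> x)" by (rule gdom_L2[OF gO])
    show "pow_graph t_adj_graph (2 * n + 1) (Of c \<rho>) (Of c ((Aop c ^^ (2 * n + 1)) \<rho>))" for n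
      by (rule pow_t_Of[OF c])
    have ex: "(\<Sum>n\<le>N. of_real ((-1)^n / real (2*n+1) * sqrt \<epsilon>^(2*n+1)) * Of c ((Aop c ^^ (2*n+1)) \<rho>) x)
        + of_real (sqrt \<epsilon>) * (- (\<i> / of_real (2 * sqrt \<epsilon>)) * rho_T \<epsilon> \<rho> x \<alpha> * of_real x * \<xi> x)
      = (\<Sum>j\<le>d. an N j * Of c ((pderiv^^j) \<rho>) x)" for N x
      using key[where E = "complex_of_real x * complex_of_real (exp (- c * x^2))" and N = N and x = x]
      unfolding Of_def \<xi>x by (simp add: mult.assoc)
    show "(\<lambda>N. l2norm (\<lambda>x. (\<Sum>n\<le>N. of_real ((-1)^n / real (2*n+1) * sqrt \<epsilon>^(2*n+1)) * Of c ((Aop c ^^ (2*n+1)) \<rho>) x)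
        + of_real (sqrt \<epsilon>) * (- (\<i> / of_real (2 * sqrt \<epsilon>)) * rho_T \<epsilon> \<rho> x \<alpha> * of_real x * \<xi> x))) \<longlonglongrightarrow> 0"
      unfolding ex by (rule l2_tendsto[OF finite_atMost gdom_L2[OF gdom_Of[OF c]] an0])
  qed
  show ?thesis using S1 S2 by blast
qed

end
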